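(* Let $\rho_1\ge 2$, let $\theta\in\Theta^+$ satisfy $\|\theta\|_1<1$, and let $m\in\mathcal M_1$. Then the minimum of $\gamma$ over the linear space $\Theta_m$ is attained at a point of $\Theta^+_{m,2}$. Consequently $$\theta_{m,\rho_1}=\arg\min_{\theta'\in\Theta_m}\gamma(\theta')\quad\text{and}\quad \gamma(\theta_{m,\rho_1})=\mathrm{Var}_\theta\big(X[0,0]\,\big|\,X_m\big),$$ and moreover $\|\theta_{m,\rho_1}\|_1\le\|\theta\|_1$. The same statements hold for $\theta^{\rm iso}_{m,\rho_1}$ (with $\Theta_m$ replaced by $\Theta^{\rm iso}_m$) when $\theta\in\Theta^{+,\rm iso}$ and $\|\theta\|_1<1$.
   Context: Let $p\ge 2$ be an integer. $\Lambda=\{0,\dots,p-1\}^2$ is the $p\times p$ discrete torus; indices of $p\times p$ arrays are taken modulo $p$. $X=(X[i,j])_{(i,j)\in\Lambda}$ is a centered Gaussian random field, stationary on the torus, with nonsingular covariance; $X^v\in\mathbb R^{p^2}$ is its vectorization $X^v[ip+j+1]=X[i,j]$ and $\Sigma$ the covariance of $X^v$. For $m\subset\Lambda$, $X_m=(X[i,j])_{(i,j)\in m}$. $\Theta$ is the vector space of real $p\times p$ arrays $\theta$ indexed by $\Lambda$ with $\theta[0,0]=0$ and $\theta[i,j]=\theta[-i,-j]$ for all $(i,j)$. $C(\theta)$ is the $p^2\times p^2$ matrix with $C(\theta)[i_1p+j_1+1,\,i_2p+j_2+1]=\theta[i_2-i_1,j_2-j_1]$. $\Theta^+=\{\theta\in\Theta: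 I_{p^2}-C(\theta)\text{ is positive definite}\}$. The law of $X$ is parametrized by a unique $\theta\in\Theta^+$ and $\sigma^2>0$ with $\Sigma=\sigma^2(I_{p^2}-C(\theta))^{-1}$; $\mathrm{Var}_\theta,\mathbb E_\theta$ refer to this law ($\sigma^2$ fixed). Loss: $l(\theta_1,\theta_2)=p^{-2}\,\mathrm{tr}\big[(C(\theta_1)-C(\theta_2))\Sigma(C(\theta_1)-C(\theta_2))\big]$. Population contrast: for $\theta'\in\Theta$, $\gamma(\theta')=\mathbb E_\theta\big[\big(X[0,0]-\sum_{(i,j)\neq(0,0)}\theta'[i,j]X[i,j]\big)^2\big]$ (so $\gamma(\theta')-\gamma(\theta)=l(\theta',\theta)$). Models: toroidal norm $|(i,j)|_t^2=(i\wedge(p-i))^2+(j\wedge(p-j))^2$; for $r\ge0$, $m(r)=\{(i,j)\in\Lambda\setminus\{(0,0)\}:|(i,j)|_t\le r\}$; $\mathcal M_1$ is the collection of the distinct sets $m(r)$. For $m\in\mathcal M_1$: $\Theta_m=\{\theta\in\Theta:\theta[i,j]=0\ \forall(i,j)\notin m\}$, $\Theta^+_m=\Theta_m\cap\Theta^+$, $\Theta^+_{m,\rho}=\{\theta\in\Theta^+_m:\varphi_{\max}(I_{p^2}-C(\theta))<\rho\}$. For $\rho_1\ge2$, $\theta_{m,\rho_1}$ is the minimizer of $\theta'\mapsto l(\theta',\theta)$ over the closure $\overline{\Theta^+_{m,\rho_1}}$. Isotropic versions: $G$ is the group of the 8 isometries of the square acting on $\Lambda$ (generated by $(i,j)\mapsto(j,i)$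 and $(i,j)\mapsto(-i,j)$, mod $p$). $\Theta^{\rm iso}=\{\theta\in\Theta:\theta[g.(i,j)]=\theta[i,j]\ \forall g\in G,(i,j)\}$, $\Theta^{\rm iso}_m=\Theta_m\cap\Theta^{\rm iso}$, $\Theta^{+,\rm iso}=\Theta^+\cap\Theta^{\rm iso}$, $\Theta^{+,\rm iso}_{m,\rho}=\Theta^+_{m,\rho}\cap\Theta^{\rm iso}$, and $\theta^{\rm iso}_{m,\rho_1}$ is the minimizer of $l(\cdot,\theta)$ over $\overline{\Theta^{+,\rm iso}_{m,\rho_1}}$. $\|\theta\|_1=\sum_{(i,j)}|\theta[i,j]|$; $\varphi_{\max}$ is the largest eigenvalue. *)

theory Defs
  imports "HOL-Analysis.Analysis" "Jordan_Normal_Form.Char_Poly" "Jordan_Normal_Form.DL_Submatrix"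
begin

text \<open>Arrays indexed by the torus Lambda = {0..<p} x {0..<p} are functions nat x nat => real
  that vanish outside Lambda. Vectorization is 0-based: (i,j) |-> i*p+j.\<close>

definition Lam :: "nat \<Rightarrow> (nat \<times> nat) set" where
  "Lam p = {0..<p} \<times> {0..<p}"

definition md :: "nat \<Rightarrow> int \<Rightarrow> nat" where
  "md p a = nat (a mod int p)"

definition Theta :: "nat \<Rightarrow> (nat \<times> nat \<Rightarrow> real) set" where
  "Theta p = {\<theta>. (\<forall>x. x \<notin> Lam p \<longrightarrow> \<theta> x = 0) \<and> \<theta> (0,0) = 0 \<and>
      (\<forall>i j. (i,j) \<in> Lam p \<longrightarrow> \<theta> (i,j) = \<theta> (md p (- int i), md p (- int j)))}"

definition Cmat :: "nat \<Rightarrow> (nat \<times> nat \<Rightarrow> real) \<Rightarrow> real mat" where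
  "Cmat p \<theta> = mat (p*p) (p*p) (\<lambda>(r,s).
      \<theta> (md p (int (s div p) - int (r div p)), md p (int (s mod p) - int (r mod p))))"

definition pos_def_mat :: "real mat \<Rightarrow> bool" where
  "pos_def_mat A = (A \<in> carrier_mat (dim_row A) (dim_row A) \<and>
      (\<forall>v \<in> carrier_vec (dim_row A). v \<noteq> 0\<^sub>v (dim_row A) \<longrightarrow> v \<bullet> (A *\<^sub>v v) > 0))"

definition phi_max :: "real mat \<Rightarrow> real" where
  "phi_max A = Max {k. eigenvalue A k}"

definition IminusC :: "nat \<Rightarrow> (nat \<times> nat \<Rightarrow> real) \<Rightarrow> real mat" where
  "IminusC p \<theta> = 1\<^sub>m (p*p) - Cmat p \<theta>"

definition ThetaPlus :: "nat \<Rightarrow> (nat \<times> nat \<Rightarrow> real) set" where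
  "ThetaPlus p = {\<theta> \<in> Theta p. pos_def_mat (IminusC p \<theta>)}"

definition minv :: "real mat \<Rightarrow> real mat" where
  "minv A = (SOME B. B \<in> carrier_mat (dim_row A) (dim_row A) \<and> A * B = 1\<^sub>m (dim_row A)
                     \<and> B * A = 1\<^sub>m (dim_row A))"

text \<open>covariance of the vectorized field: Sigma = sigma^2 (I - C(theta))^{-1}\<close>
definition CovS :: "nat \<Rightarrow> real \<Rightarrow> (nat \<times> nat \<Rightarrow> real) \<Rightarrow> real mat" where
  "CovS p s2 \<theta> = s2 \<cdot>\<^sub>m minv (IminusC p \<theta>)"

definition vecz :: "nat \<Rightarrow> (nat \<times> nat \<Rightarrow> real) \<Rightarrow> real vec" where
  "vecz p a = vec (p*p) (\<lambda>r. a (r div p, r mod p))"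

definition mtrace :: "real mat \<Rightarrow> real" where
  "mtrace A = (\<Sum>i<dim_row A. A $$ (i,i))"

text \<open>loss l(theta1, theta2) where theta is the true parameter\<close>
definition loss :: "nat \<Rightarrow> real \<Rightarrow> (nat \<times> nat \<Rightarrow> real) \<Rightarrow> (nat \<times> nat \<Rightarrow> real)
    \<Rightarrow> (nat \<times> nat \<Rightarrow> real) \<Rightarrow> real" where
  "loss p s2 \<theta> \<theta>1 \<theta>2 = (1 / (real p)^2) *
     mtrace ((Cmat p \<theta>1 - Cmat p \<theta>2) * CovS p s2 \<theta> * (Cmat p \<theta>1 - Cmat p \<theta>2))"

text \<open>population contrast gamma(theta') = E[(X[0,0] - sum theta'[i,j] X[i,j])^2]
  = a^T Sigma a  with a[0,0] = 1, a[i,j] = - theta'[i,j] otherwise\<close>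
definition gamma :: "nat \<Rightarrow> real \<Rightarrow> (nat \<times> nat \<Rightarrow> real) \<Rightarrow> (nat \<times> nat \<Rightarrow> real) \<Rightarrow> real" where
  "gamma p s2 \<theta> \<theta>' = (let a = vecz p (\<lambda>x. if x = (0,0) then 1 else - \<theta>' x)
                      in a \<bullet> (CovS p s2 \<theta> *\<^sub>v a))"

text \<open>Var(X[0,0] | X_m) for the centered Gaussian vector with covariance Sigma
  (Gaussian conditioning / Schur complement formula)\<close>
definition cond_var :: "nat \<Rightarrow> real \<Rightarrow> (nat \<times> nat \<Rightarrow> real) \<Rightarrow> (nat \<times> nat) set \<Rightarrow> real" where
  "cond_var p s2 \<theta> m = (let S = CovS p s2 \<theta>; M = (\<lambda>(i,j). i*p+j) ` m in
      S $$ (0,0) - (submatrix S {0} M * minv (submatrix S M M) * submatrix S M {0}) $$ (0,0))"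

definition norm1 :: "nat \<Rightarrow> (nat \<times> nat \<Rightarrow> real) \<Rightarrow> real" where
  "norm1 p \<theta> = (\<Sum>x\<in>Lam p. \<bar>\<theta> x\<bar>)"

definition tnorm2 :: "nat \<Rightarrow> nat \<times> nat \<Rightarrow> nat" where
  "tnorm2 p x = (min (fst x) (p - fst x))^2 + (min (snd x) (p - snd x))^2"

definition mball :: "nat \<Rightarrow> real \<Rightarrow> (nat \<times> nat) set" where
  "mball p r = {x \<in> Lam p - {(0,0)}. sqrt (real (tnorm2 p x)) \<le> r}"

definition M1 :: "nat \<Rightarrow> (nat \<times> nat) set set" where
  "M1 p = {mball p r | r. r \<ge> 0}"

definition Theta_m :: "nat \<Rightarrow> (nat \<times> nat) set \<Rightarrow> (nat \<times> nat \<Rightarrow> real) set" where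
  "Theta_m p m = {\<theta> \<in> Theta p. \<forall>x. x \<notin> m \<longrightarrow> \<theta> x = 0}"

definition ThetaPlus_m :: "nat \<Rightarrow> (nat \<times> nat) set \<Rightarrow> (nat \<times> nat \<Rightarrow> real) set" where
  "ThetaPlus_m p m = Theta_m p m \<inter> ThetaPlus p"

definition ThetaPlus_m_rho :: "nat \<Rightarrow> (nat \<times> nat) set \<Rightarrow> real \<Rightarrow> (nat \<times> nat \<Rightarrow> real) set" where
  "ThetaPlus_m_rho p m \<rho> = {\<theta> \<in> ThetaPlus_m p m. phi_max (IminusC p \<theta>) < \<rho>}"

definition G_iso :: "nat \<Rightarrow> (nat \<times> nat \<Rightarrow> nat \<times> nat) set" where
  "G_iso p = (let n = (\<lambda>i. md p (- int i)) in
     {\<lambda>(i,j). (i,j), \<lambda>(i,j). (j,i), \<lambda>(i,j). (n i, j), \<lambda>(i,j). (i, n j),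
      \<lambda>(i,j). (n i, n j), \<lambda>(i,j). (j, n i), \<lambda>(i,j). (n j, i), \<lambda>(i,j). (n j, n i)})"

definition Theta_iso :: "nat \<Rightarrow> (nat \<times> nat \<Rightarrow> real) set" where
  "Theta_iso p = {\<theta> \<in> Theta p. \<forall>g \<in> G_iso p. \<forall>x \<in> Lam p. \<theta> (g x) = \<theta> x}"

definition is_argmin_on :: "('a \<Rightarrow> real) \<Rightarrow> 'a set \<Rightarrow> 'a \<Rightarrow> bool" where
  "is_argmin_on f S x = (x \<in> S \<and> (\<forall>y \<in> S. f x \<le> f y))"

definition theta_proj :: "nat \<Rightarrow> real \<Rightarrow> (nat \<times> nat \<Rightarrow> real) \<Rightarrow> (nat \<times> nat \<Rightarrow> real) set
    \<Rightarrow> (nat \<times> nat \<Rightarrow> real)" where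
  "theta_proj p s2 \<theta> S = (THE t. is_argmin_on (\<lambda>t'. loss p s2 \<theta> t' \<theta>) (closure S) t)"

end

theory Submission
  imports Defs
begin


lemma md_lt: "0 < p \<Longrightarrow> md p a < p"
  unfolding md_def by (simp add: nat_less_iff)

lemma int_md: "0 < p \<Longrightarrow> int (md p a) = a mod int p"
  unfolding md_def using pos_mod_sign[of "int p" a] by simp

lemma md_nat: "i < p \<Longrightarrow> md p (int i) = i"
  unfolding md_def by (simp flip: of_nat_mod)

lemma md_mod: "md p (a mod int p) = md p a"
  unfolding md_def by (simp only: mod_mod_trivial)

lemma md_eq_iff: "0 < p \<Longrightarrow> md p a = md p b \<longleftrightarrow> a mod int p = b mod int p"
  using int_md[of p a] int_md[of p b] by (metis of_nat_eq_iff)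
lemma bij_md_aff:
  assumes p: "0 < p" and c: "c = 1 \<or> c = -1"
  shows "bij_betw (\<lambda>i. md p (c * int i + a)) {0..<p} {0..<p}"
proof -
  have inj: "inj_on (\<lambda>i. md p (c * int i + a)) {0..<p}"
  proof (rule inj_onI)
    fix i j assume i: "i \<in> {0..<p}" and j: "j \<in> {0..<p}" and e: "md p (c * int i + a) = md p (c * int j + a)"
    hence "(c * int i + a) mod int p = (c * int j + a) mod int p" using md_eq_iff[OF p] by blast
    have ei: "(c * int i) mod int p = ((c * int i + a) mod int p - a) mod int p" by (simp add: mod_diff_left_eq)
    have ej: "(c * int j) mod int p = ((c * int j + a) mod int p - a) mod int p" by (simp add: mod_diff_left_eq)
    have "(c * int i) mod int p = (c * int j) mod int p" using ei ej \<open>(c * int i + a) mod int p = (c * int j + a) mod int p\<close> by simp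
    hence "(c * ((c * int i) mod int p)) mod int p = (c * ((c * int j) mod int p)) mod int p" by simp
    hence "(c*(c * int i)) mod int p = (c*(c * int j)) mod int p" by (simp add: mod_mult_right_eq)
    hence "int i mod int p = int j mod int p" using c by auto
    thus "i = j" using i j by (simp add: zmod_int[symmetric])
  qed
  have img: "(\<lambda>i. md p (c * int i + a)) ` {0..<p} \<subseteq> {0..<p}" using md_lt[OF p] by auto
  show ?thesis unfolding bij_betw_def using inj img
    by (simp add: endo_inj_surj)
qed

lemma sum_md_aff:
  assumes p: "0 < p" and c: "c = 1 \<or> c = -1"
  shows "(\<Sum>i<p. g (md p (c * int i + a))) = (\<Sum>i<p. g i)"
proof -
  have "(\<Sum>i\<in>{0..<p}. g (md p (c * int i + a))) = (\<Sum>i\<in>{0..<p}. g i)"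
    using sum.reindex_bij_betw[OF bij_md_aff[OF p c, of a], of g] by simp
  thus ?thesis by (simp add: lessThan_atLeast0)
qed

lemma sum_Lam: "(\<Sum>x\<in>Lam p. f x) = (\<Sum>i<p. \<Sum>j<p. f (i,j))"
  unfolding Lam_def by (simp add: sum.cartesian_product lessThan_atLeast0)

lemma sum_dv: "(\<Sum>r<p*p. f (r div p, r mod p)) = (\<Sum>x\<in>Lam p. f x)"
proof -
  have "bij_betw (\<lambda>r. (r div p, r mod p)) {..<p*p} (Lam p)"
  proof (rule bij_betw_byWitness[where f' = "\<lambda>(i,j). i*p+j"])
    show "\<forall>a\<in>{..<p * p}. (case (a div p, a mod p) of (i, j) \<Rightarrow> i * p + j) = a" by simp
    show "\<forall>a'\<in>Lam p. ((case a' of (i, j) \<Rightarrow> i * p + j) div p, (case a' of (i, j) \<Rightarrow> i * p + j) mod p) = a'"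
      unfolding Lam_def by auto
    show "(\<lambda>r. (r div p, r mod p)) ` {..<p * p} \<subseteq> Lam p"
      unfolding Lam_def by (auto simp: less_mult_imp_div_less intro!: mod_less_divisor Nat.gr0I)
    show "(\<lambda>(i, j). i * p + j) ` Lam p \<subseteq> {..<p * p}"
      unfolding Lam_def
    proof clarsimp
      fix a b assume "a < p" "b < p"
      hence "a*p + b < a*p + p" by simp
      also have "\<dots> = (a+1)*p" by simp
      also have "\<dots> \<le> p*p" using \<open>a<p\<close> by (metis Suc_eq_plus1 Suc_leI mult_le_mono1)
      finally show "a*p+b < p*p" .
    qed
  qed
  from sum.reindex_bij_betw[OF this, of f] show ?thesis by simp
qed

lemma sum_row_shift:
  assumes p: "0 < p"
  shows "(\<Sum>s<p*p. f (md p (int (s div p) - a), md p (int (s mod p) - b))) = (\<Sum>x\<in>Lam p. f x)"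
proof -
  have "(\<Sum>s<p*p. f (md p (int (s div p) - a), md p (int (s mod p) - b)))
     = (\<Sum>i<p. \<Sum>j<p. f (md p (1 * int i + - a), md p (1 * int j + - b)))"
    using sum_dv[of "\<lambda>(i,j). f (md p (int i - a), md p (int j - b))" p] by (simp add: sum_Lam)
  also have "\<dots> = (\<Sum>i<p. \<Sum>j<p. f (md p (1 * int i + - a), j))"
    by (rule sum.cong[OF refl], rule sum_md_aff[OF p, of 1 "\<lambda>j. f (_, j)"], simp)
  also have "\<dots> = (\<Sum>i<p. \<Sum>j<p. f (i, j))"
    by (rule sum_md_aff[OF p, of 1 "\<lambda>i. \<Sum>j<p. f (i, j)"], simp)
  finally show ?thesis by (simp add: sum_Lam)
qed

lemma sum_col_shift:
  assumes p: "0 < p"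
  shows "(\<Sum>s<p*p. f (md p (a - int (s div p)), md p (b - int (s mod p)))) = (\<Sum>x\<in>Lam p. f x)"
proof -
  have "(\<Sum>s<p*p. f (md p (a - int (s div p)), md p (b - int (s mod p))))
     = (\<Sum>i<p. \<Sum>j<p. f (md p (-1 * int i + a), md p (-1 * int j + b)))"
    using sum_dv[of "\<lambda>(i,j). f (md p (a - int i), md p (b - int j))" p] by (simp add: sum_Lam)
  also have "\<dots> = (\<Sum>i<p. \<Sum>j<p. f (md p (-1 * int i + a), j))"
    by (rule sum.cong[OF refl], rule sum_md_aff[OF p, of "-1" "\<lambda>j. f (_, j)"], simp)
  also have "\<dots> = (\<Sum>i<p. \<Sum>j<p. f (i, j))"
    by (rule sum_md_aff[OF p, of "-1" "\<lambda>i. \<Sum>j<p. f (i, j)"], simp)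
  finally show ?thesis by (simp add: sum_Lam)
qed




lemma mat_mult_entry:
  assumes "A \<in> carrier_mat n n" "B \<in> carrier_mat n n" "i < n" "j < n"
  shows "(A * B) $$ (i,j) = (\<Sum>k<n. A $$ (i,k) * B $$ (k,j))"
  using assms by (simp add: scalar_prod_def lessThan_atLeast0)

lemma qf_sum:
  assumes "A \<in> carrier_mat n n" "v \<in> carrier_vec n" "w \<in> carrier_vec n"
  shows "w \<bullet> (A *\<^sub>v v) = (\<Sum>i<n. \<Sum>j<n. w $ i * A $$ (i,j) * v $ j)"
  using assms by (simp add: scalar_prod_def lessThan_atLeast0 sum_distrib_left mult.assoc)

lemma inv_PD:
  fixes A :: "real mat"
  assumes A: "A \<in> carrier_mat n n"
    and pd: "\<forall>v\<in>carrier_vec n. v \<noteq> 0\<^sub>v n \<longrightarrow> v \<bullet> (A *\<^sub>v v) > 0"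
  shows "minv A \<in> carrier_mat n n \<and> A * minv A = 1\<^sub>m n \<and> minv A * A = 1\<^sub>m n"
proof -
  have "det A \<noteq> 0"
  proof
    assume "det A = 0"
    then obtain v where v: "v \<in> carrier_vec n" "v \<noteq> 0\<^sub>v n" "A *\<^sub>v v = 0\<^sub>v n"
      using det_0_iff_vec_prod_zero[OF A] by blast
    with pd have "v \<bullet> (A *\<^sub>v v) > 0" by blast
    with v show False by simp
  qed
  from det_non_zero_imp_unit[OF A this, of undefined]
  have "\<exists>B\<in>carrier_mat n n. A * B = 1\<^sub>m n \<and> B * A = 1\<^sub>m n"
    unfolding Units_def ring_mat_simps by auto
  hence ex: "\<exists>B. B \<in> carrier_mat (dim_row A) (dim_row A) \<and> A * B = 1\<^sub>m (dim_row A) \<and> B * A = 1\<^sub>m (dim_row A)"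
    using A by auto
  show ?thesis using someI_ex[OF ex] A unfolding minv_def by auto
qed

lemma inv_unique_entry:
  fixes A K K' :: "real mat"
  assumes A: "A \<in> carrier_mat n n" and K: "K \<in> carrier_mat n n" and KA: "K * A = 1\<^sub>m n"
    and K': "K' \<in> carrier_mat n n"
    and e: "\<And>i j. i < n \<Longrightarrow> j < n \<Longrightarrow> (\<Sum>k<n. A $$ (i,k) * K' $$ (k,j)) = (if i = j then 1 else 0)"
  shows "K' = K"
proof -
  have AK': "A * K' = 1\<^sub>m n"
  proof (rule eq_matI)
    fix i j assume i: "i < dim_row (1\<^sub>m n :: real mat)" and j: "j < dim_col (1\<^sub>m n :: real mat)"
    hence "(A * K') $$ (i,j) = (\<Sum>k<n. A $$ (i,k) * K' $$ (k,j))" using mat_mult_entry[OF A K'] by simp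
    thus "(A * K') $$ (i,j) = 1\<^sub>m n $$ (i,j)" using e i j by simp
  qed (insert A K', auto)
  have "K' = (K * A) * K'" using K' by (simp add: KA)
  also have "\<dots> = K * (A * K')" using assoc_mult_mat[OF K A K'] .
  also have "\<dots> = K" using K by (simp add: AK')
  finally show ?thesis .
qed

lemma inv_perm:
  fixes A K :: "real mat"
  assumes A: "A \<in> carrier_mat n n" and K: "K \<in> carrier_mat n n" and AK: "A * K = 1\<^sub>m n" and KA: "K * A = 1\<^sub>m n"
    and bij: "bij_betw \<pi> {..<n} {..<n}"
    and inv: "\<And>i j. i < n \<Longrightarrow> j < n \<Longrightarrow> A $$ (\<pi> i, \<pi> j) = A $$ (i,j)"
    and ij: "i < n" "j < n"
  shows "K $$ (\<pi> i, \<pi> j) = K $$ (i,j)"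
proof -
  define K' where "K' = mat n n (\<lambda>(i,j). K $$ (\<pi> i, \<pi> j))"
  have K'c: "K' \<in> carrier_mat n n" unfolding K'_def by simp
  have pin: "\<And>i. i < n \<Longrightarrow> \<pi> i < n" using bij unfolding bij_betw_def by auto
  have injp: "inj_on \<pi> {..<n}" using bij unfolding bij_betw_def by auto
  have "K' = K"
  proof (rule inv_unique_entry[OF A K KA K'c])
    fix i j assume i: "i < n" and j: "j < n"
    have "(\<Sum>k<n. A $$ (i,k) * K' $$ (k,j)) = (\<Sum>k<n. A $$ (\<pi> i, \<pi> k) * K $$ (\<pi> k, \<pi> j))"
      by (rule sum.cong, auto simp: K'_def inv i j)
    also have "\<dots> = (\<Sum>k<n. A $$ (\<pi> i, k) * K $$ (k, \<pi> j))"
      using sum.reindex_bij_betw[OF bij, of "\<lambda>k. A $$ (\<pi> i, k) * K $$ (k, \<pi> j)"] by simp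
    also have "\<dots> = (A * K) $$ (\<pi> i, \<pi> j)" using mat_mult_entry[OF A K pin[OF i] pin[OF j]] by simp
    also have "\<dots> = (if i = j then 1 else 0)" using AK pin[OF i] pin[OF j] injp i j
      by (auto simp: inj_on_def)
    finally show "(\<Sum>k<n. A $$ (i,k) * K' $$ (k,j)) = (if i = j then 1 else 0)" .
  qed
  thus ?thesis using ij unfolding K'_def by (metis index_mat(1) case_prod_conv)
qed

lemma inv_sym:
  fixes A K :: "real mat"
  assumes A: "A \<in> carrier_mat n n" and K: "K \<in> carrier_mat n n" and AK: "A * K = 1\<^sub>m n" and KA: "K * A = 1\<^sub>m n"
    and sym: "\<And>i j. i < n \<Longrightarrow> j < n \<Longrightarrow> A $$ (j, i) = A $$ (i,j)"
    and ij: "i < n" "j < n"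
  shows "K $$ (j, i) = K $$ (i,j)"
proof -
  define K' where "K' = mat n n (\<lambda>(i,j). K $$ (j, i))"
  have K'c: "K' \<in> carrier_mat n n" unfolding K'_def by simp
  have "K' = K"
  proof (rule inv_unique_entry[OF A K KA K'c])
    fix i j assume i: "i < n" and j: "j < n"
    have "(\<Sum>k<n. A $$ (i,k) * K' $$ (k,j)) = (\<Sum>k<n. K $$ (j, k) * A $$ (k, i))"
      by (rule sum.cong, auto simp: K'_def sym i j)
    also have "\<dots> = (K * A) $$ (j, i)" using mat_mult_entry[OF K A j i] by simp
    also have "\<dots> = (if i = j then 1 else 0)" using KA i j by auto
    finally show "(\<Sum>k<n. A $$ (i,k) * K' $$ (k,j)) = (if i = j then 1 else 0)" .
  qed
  thus ?thesis using ij unfolding K'_def by (metis index_mat(1) case_prod_conv)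
qed




definition cf :: "nat \<Rightarrow> (nat \<times> nat \<Rightarrow> real) \<Rightarrow> nat \<Rightarrow> nat \<Rightarrow> real" where
  "cf p f r s = f (md p (int (s div p) - int (r div p)), md p (int (s mod p) - int (r mod p)))"

definition qf :: "nat \<Rightarrow> real mat \<Rightarrow> (nat \<Rightarrow> real) \<Rightarrow> (nat \<Rightarrow> real) \<Rightarrow> real" where
  "qf n A x y = (\<Sum>i<n. \<Sum>j<n. x i * A $$ (i,j) * y j)"

definition av :: "nat \<Rightarrow> (nat \<times> nat \<Rightarrow> real) \<Rightarrow> nat \<Rightarrow> real" where
  "av p t r = (if r = 0 then 1 else - t (r div p, r mod p))"

lemma Cmat_carrier: "Cmat p f \<in> carrier_mat (p*p) (p*p)"
  unfolding Cmat_def by simp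

lemma Cmat_index: "r < p*p \<Longrightarrow> s < p*p \<Longrightarrow> Cmat p f $$ (r,s) = cf p f r s"
  unfolding Cmat_def cf_def by simp

lemma IminusC_carrier: "IminusC p f \<in> carrier_mat (p*p) (p*p)"
  unfolding IminusC_def by (rule minus_carrier_mat[OF Cmat_carrier])

lemma IminusC_index: "r < p*p \<Longrightarrow> s < p*p \<Longrightarrow> IminusC p f $$ (r,s) = (if r = s then 1 else 0) - cf p f r s"
  unfolding IminusC_def using Cmat_carrier[of p f] by (simp add: Cmat_index)

lemma md_neg_md: assumes p: "0 < p" shows "md p (- int (md p d)) = md p (- d)"
proof -
  have "(- int (md p d)) mod int p = (- d) mod int p" unfolding int_md[OF p] by (rule mod_minus_eq)
  thus ?thesis unfolding md_def by simp
qed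

lemma dv_lt: fixes r p :: nat assumes r: "r < p*p" shows "r div p < p \<and> r mod p < p"
proof -
  have p: "0 < p" using r by (cases p) auto
  show ?thesis using r p by (simp add: less_mult_imp_div_less)
qed

lemma dv_Lam: "r < p*p \<Longrightarrow> (r div p, r mod p) \<in> Lam p"
  using dv_lt unfolding Lam_def by auto

lemma Theta_sym: "f \<in> Theta p \<Longrightarrow> (i,j) \<in> Lam p \<Longrightarrow> f (md p (- int i), md p (- int j)) = f (i,j)"
  unfolding Theta_def by auto

lemma Theta_sym_md: assumes f: "f \<in> Theta p" and p: "0 < p"
  shows "f (md p (a - b), md p (c - d)) = f (md p (b - a), md p (d - c))"
proof -
  have L: "(md p (b - a), md p (d - c)) \<in> Lam p" using md_lt[OF p] unfolding Lam_def by auto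
  have "f (md p (b - a), md p (d - c)) = f (md p (- int (md p (b - a))), md p (- int (md p (d - c))))"
    using Theta_sym[OF f L] by simp
  also have "\<dots> = f (md p (a - b), md p (c - d))" by (simp add: md_neg_md[OF p])
  finally show ?thesis by simp
qed

lemma cf_sym: "f \<in> Theta p \<Longrightarrow> 0 < p \<Longrightarrow> cf p f s r = cf p f r s"
  unfolding cf_def using Theta_sym_md by metis

lemma cf_diag: "f \<in> Theta p \<Longrightarrow> 0 < p \<Longrightarrow> cf p f r r = 0"
  unfolding cf_def Theta_def by (simp add: md_def)

lemma cf_row0: "r < p*p \<Longrightarrow> cf p f 0 r = f (r div p, r mod p)"
  unfolding cf_def using dv_lt[of r p] by (simp add: md_nat)

lemma cf_rowsum: "0 < p \<Longrightarrow> r < p*p \<Longrightarrow> (\<Sum>s<p*p. g (cf p f r s)) = (\<Sum>x\<in>Lam p. g (f x))"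
  unfolding cf_def using sum_row_shift[of p "\<lambda>x. g (f x)"] by simp

lemma cf_colsum: "0 < p \<Longrightarrow> s < p*p \<Longrightarrow> (\<Sum>r<p*p. g (cf p f r s)) = (\<Sum>x\<in>Lam p. g (f x))"
  unfolding cf_def using sum_col_shift[of p "\<lambda>x. g (f x)"] by simp

lemma qf_diff: "qf n A (\<lambda>r. x r - y r) (\<lambda>r. x r - y r) = qf n A x x - qf n A x y - qf n A y x + qf n A y y"
  unfolding qf_def by (simp add: algebra_simps sum.distrib sum_subtractf)

lemma qf_sym: assumes "\<And>i j. i < n \<Longrightarrow> j < n \<Longrightarrow> A $$ (j,i) = A $$ (i,j)"
  shows "qf n A x y = qf n A y x"
  unfolding qf_def
  by (subst sum.swap, rule sum.cong[OF refl], rule sum.cong[OF refl], simp add: assms mult.commute mult.left_commute)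

lemma qf_vec: "A \<in> carrier_mat n n \<Longrightarrow> qf n A x y = vec n x \<bullet> (A *\<^sub>v vec n y)"
  unfolding qf_def by (subst qf_sum[of A n], auto)

lemma vecz_index: "r < p*p \<Longrightarrow> vecz p f $ r = f (r div p, r mod p)"
  unfolding vecz_def by simp

lemma dv_zero: fixes r p :: nat shows "0 < p \<Longrightarrow> (r div p, r mod p) = (0,0) \<longleftrightarrow> r = 0"
proof
  assume p: "0 < p" and "(r div p, r mod p) = (0,0)"
  hence "r div p = 0" "r mod p = 0" by auto
  thus "r = 0" using div_mult_mod_eq[of r p] by simp
qed simp




lemma mult_entry_gen:
  assumes "A \<in> carrier_mat nr n" "B \<in> carrier_mat n nc" "i < nr" "j < nc"
  shows "(A * B) $$ (i,j) = (\<Sum>c<n. A $$ (i,c) * B $$ (c,j))"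
  using assms by (simp add: scalar_prod_def lessThan_atLeast0)

locale L =
  fixes p :: nat and s2 :: real and \<theta> :: "nat \<times> nat \<Rightarrow> real" and m :: "(nat \<times> nat) set"
  assumes p2: "p \<ge> 2" and s2: "s2 > 0" and th: "\<theta> \<in> ThetaPlus p"
    and R1: "norm1 p \<theta> < 1" and mM: "m \<in> M1 p"
begin

abbreviation "n \<equiv> p * p"
abbreviation "Q \<equiv> IminusC p \<theta>"
abbreviation "K \<equiv> minv Q"
abbreviation "S \<equiv> CovS p s2 \<theta>"

lemma p0: "0 < p" using p2 by simp

lemma thT: "\<theta> \<in> Theta p" using th unfolding ThetaPlus_def by simp

lemma Qc: "Q \<in> carrier_mat n n" by (rule IminusC_carrier)

lemma Qpd: "\<forall>v\<in>carrier_vec n. v \<noteq> 0\<^sub>v n \<longrightarrow> v \<bullet> (Q *\<^sub>v v) > 0"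
  using th Qc unfolding ThetaPlus_def pos_def_mat_def by auto

lemma Kinv: "K \<in> carrier_mat n n \<and> Q * K = 1\<^sub>m n \<and> K * Q = 1\<^sub>m n"
  by (rule inv_PD[OF Qc Qpd])

lemma Kc: "K \<in> carrier_mat n n" using Kinv by simp

lemma Q_idx: "i < n \<Longrightarrow> j < n \<Longrightarrow> Q $$ (i,j) = (if i = j then 1 else 0) - cf p \<theta> i j"
  by (rule IminusC_index)

lemma Qsym: "i < n \<Longrightarrow> j < n \<Longrightarrow> Q $$ (j,i) = Q $$ (i,j)"
  using cf_sym[OF thT p0] by (simp add: Q_idx)

lemma Ksym: "i < n \<Longrightarrow> j < n \<Longrightarrow> K $$ (j,i) = K $$ (i,j)"
  using inv_sym[OF Qc Kc _ _ Qsym] Kinv by blast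

lemma Sc: "S \<in> carrier_mat n n" using Kc unfolding CovS_def by simp

lemma S_idx: "i < n \<Longrightarrow> j < n \<Longrightarrow> S $$ (i,j) = s2 * K $$ (i,j)"
  using Kc unfolding CovS_def by simp

lemma Ssym: "i < n \<Longrightarrow> j < n \<Longrightarrow> S $$ (j,i) = S $$ (i,j)"
  using Ksym by (simp add: S_idx)

lemma Kpd: assumes v: "v \<in> carrier_vec n" "v \<noteq> 0\<^sub>v n" shows "v \<bullet> (K *\<^sub>v v) > 0"
proof -
  define w where "w = K *\<^sub>v v"
  have wc: "w \<in> carrier_vec n" unfolding w_def using Kc v by simp
  have Qw: "Q *\<^sub>v w = v" unfolding w_def
    using assoc_mult_mat_vec[OF Qc Kc v(1), symmetric] Kinv v(1) by simp
  have "w \<noteq> 0\<^sub>v n"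
  proof
    assume "w = 0\<^sub>v n"
    hence "Q *\<^sub>v w = 0\<^sub>v n" using Qc by (intro eq_vecI) auto
    thus False using Qw v by simp
  qed
  hence "w \<bullet> (Q *\<^sub>v w) > 0" using Qpd wc by blast
  hence "w \<bullet> v > 0" using Qw by simp
  thus ?thesis unfolding w_def using comm_scalar_prod[OF v(1) wc] w_def by simp
qed

lemma qf_S: "qf n S x y = s2 * qf n K x y"
  unfolding qf_def by (simp add: S_idx sum_distrib_left mult.assoc mult.left_commute)

lemma qf_pos: assumes "r < n" "x r \<noteq> 0" shows "qf n S x x > 0"
proof -
  have "vec n x \<noteq> 0\<^sub>v n" using assms by (metis index_vec index_zero_vec(1))
  hence "vec n x \<bullet> (K *\<^sub>v vec n x) > 0" using Kpd by simp
  thus ?thesis using s2 by (simp add: qf_S qf_vec[OF Kc])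
qed

lemma qf_nonneg: "qf n S x x \<ge> 0"
proof (cases "\<exists>r<n. x r \<noteq> 0")
  case True thus ?thesis using qf_pos by (meson less_le)
next
  case False thus ?thesis unfolding qf_def by simp
qed

lemma Ssym_qf: "qf n S x y = qf n S y x"
  by (rule qf_sym, rule Ssym)

lemma gamma_qf: "gamma p s2 \<theta> t = qf n S (av p t) (av p t)"
proof -
  have "vecz p (\<lambda>x. if x = (0,0) then 1 else - t x) = vec n (av p t)"
    unfolding vecz_def av_def using dv_zero[OF p0] by (intro eq_vecI) auto
  thus ?thesis unfolding gamma_def Let_def using qf_vec[OF Sc] by simp
qed

lemma m_sub: "m \<subseteq> Lam p - {(0,0)}"
  using mM unfolding M1_def mball_def by auto

abbreviation "M \<equiv> (\<lambda>(i,j). i*p+j) ` m"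

lemma idx_lt: "(i,j) \<in> Lam p \<Longrightarrow> i*p+j < n"
proof -
  assume "(i,j) \<in> Lam p"
  hence a: "i < p" "j < p" unfolding Lam_def by auto
  hence "i*p + j < i*p + p" by simp
  also have "\<dots> = (i+1)*p" by simp
  also have "\<dots> \<le> p*p" using a by (metis Suc_eq_plus1 Suc_leI mult_le_mono1)
  finally show ?thesis .
qed

lemma idx_dv: "(i,j) \<in> Lam p \<Longrightarrow> (i*p+j) div p = i \<and> (i*p+j) mod p = j"
  unfolding Lam_def by auto

lemma M_lt: "r \<in> M \<Longrightarrow> r < n"
  using m_sub idx_lt by auto

lemma M_iff: "r < n \<Longrightarrow> r \<in> M \<longleftrightarrow> (r div p, r mod p) \<in> m"
proof
  assume "r \<in> M"
  then obtain i j where ij: "(i,j) \<in> m" "r = i*p+j" by auto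
  hence "(i,j) \<in> Lam p" using m_sub by auto
  thus "(r div p, r mod p) \<in> m" using ij idx_dv by simp
next
  assume "r < n" "(r div p, r mod p) \<in> m"
  moreover have "r = (r div p) * p + r mod p" by simp
  ultimately show "r \<in> M" by (metis (no_types, lifting) case_prod_conv image_eqI)
qed

lemma zero_notin_M: "0 \<notin> M"
  using M_iff[of 0] m_sub p0 by auto

lemma M_fin: "finite M"
  using M_lt by (meson finite_lessThan finite_subset lessThan_iff subsetI)

abbreviation "k \<equiv> card M"

lemma card_M: "card {i. i < dim_row S \<and> i \<in> M} = k" "card {i. i < dim_col S \<and> i \<in> M} = k"
proof -
  have "{i. i < dim_row S \<and> i \<in> M} = M" "{i. i < dim_col S \<and> i \<in> M} = M" using Sc M_lt by auto
  thus "card {i. i < dim_row S \<and> i \<in> M} = k" "card {i. i < dim_col S \<and> i \<in> M} = k" by auto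
qed

lemma pick_M: "a < k \<Longrightarrow> pick M a \<in> M" by (rule pick_in_set_le)

lemma pick_lt: "a < k \<Longrightarrow> pick M a < n" using pick_M M_lt by blast

lemma pick_inj: "inj_on (pick M) {..<k}"
proof (rule inj_onI)
  fix a b assume a: "a \<in> {..<k}" and b: "b \<in> {..<k}" and e: "pick M a = pick M b"
  show "a = b"
  proof (rule ccontr)
    assume "a \<noteq> b"
    hence "a < b \<or> b < a" by auto
    thus False using pick_mono_le[of b M a] pick_mono_le[of a M b] a b e by auto
  qed
qed

lemma pick_img: "pick M ` {..<k} = M"
proof -
  have "pick M ` {..<k} \<subseteq> M" using pick_M by auto
  moreover have "card (pick M ` {..<k}) = k" using card_image[OF pick_inj] by simp
  ultimately show ?thesis using M_fin by (simp add: card_subset_eq)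
qed

definition lift :: "(nat \<Rightarrow> real) \<Rightarrow> nat \<Rightarrow> real" where
  "lift x r = (\<Sum>a<k. if pick M a = r then x a else 0)"

lemma pick_sum: "(\<Sum>r<n. lift x r * f r) = (\<Sum>a<k. x a * f (pick M a))"
proof -
  have "(\<Sum>r<n. lift x r * f r) = (\<Sum>r<n. \<Sum>a<k. if pick M a = r then x a * f r else 0)"
    unfolding lift_def sum_distrib_right by (rule sum.cong, auto intro: sum.cong)
  also have "\<dots> = (\<Sum>a<k. \<Sum>r<n. if pick M a = r then x a * f r else 0)" by (rule sum.swap)
  also have "\<dots> = (\<Sum>a<k. x a * f (pick M a))"
    by (rule sum.cong[OF refl], simp add: pick_lt)
  finally show ?thesis .
qed

lemma lift_pick: "a < k \<Longrightarrow> lift x (pick M a) = x a"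
proof -
  assume a: "a < k"
  have "lift x (pick M a) = (\<Sum>a'<k. if a' = a then x a' else 0)"
    unfolding lift_def
    by (rule sum.cong[OF refl], insert pick_inj a, auto simp: inj_on_def)
  thus ?thesis using a by simp
qed

lemma lift_out: "r \<notin> M \<Longrightarrow> lift x r = 0"
  unfolding lift_def using pick_M by (auto intro!: sum.neutral)

abbreviation "T \<equiv> submatrix S M M"
abbreviation "U \<equiv> submatrix S M {0}"
abbreviation "Tinv \<equiv> minv T"
abbreviation "W \<equiv> Tinv * U"

lemma Tc: "T \<in> carrier_mat k k"
  using card_M unfolding submatrix_def by simp

lemma T_idx: "a < k \<Longrightarrow> c < k \<Longrightarrow> T $$ (a,c) = S $$ (pick M a, pick M c)"
  using submatrix_index[of a S M c M] card_M by simp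
lemma card01: "card {i. i < dim_col S \<and> i \<in> {0::nat}} = 1"
proof -
  have "{i. i < dim_col S \<and> i \<in> {0::nat}} = {0}" using Sc p0 by auto
  thus ?thesis by simp
qed

lemma pick0: "pick {0} 0 = 0" by simp

lemma Uc: "U \<in> carrier_mat k 1"
  using card_M card01 unfolding submatrix_def by simp
lemma U_idx: "a < k \<Longrightarrow> U $$ (a,0) = S $$ (pick M a, 0)"
  using submatrix_index[of a S M 0 "{0}"] card_M card01 by simp

lemma qf_lift: "qf n S (lift x) (lift y) = (\<Sum>a<k. \<Sum>c<k. x a * S $$ (pick M a, pick M c) * y c)"
proof -
  have "qf n S (lift x) (lift y) = (\<Sum>r<n. lift x r * (\<Sum>s<n. lift y s * S $$ (r,s)))"
    unfolding qf_def by (simp add: sum_distrib_left mult.commute mult.left_commute)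
  also have "\<dots> = (\<Sum>r<n. lift x r * (\<Sum>c<k. y c * S $$ (r, pick M c)))"
    by (simp add: pick_sum)
  also have "\<dots> = (\<Sum>a<k. x a * (\<Sum>c<k. y c * S $$ (pick M a, pick M c)))"
    by (rule pick_sum)
  finally show ?thesis by (simp add: sum_distrib_left mult.commute mult.left_commute)
qed

lemma Tpd: "\<forall>v\<in>carrier_vec k. v \<noteq> 0\<^sub>v k \<longrightarrow> v \<bullet> (T *\<^sub>v v) > 0"
proof (intro ballI impI)
  fix v :: "real vec" assume v: "v \<in> carrier_vec k" "v \<noteq> 0\<^sub>v k"
  then obtain a where a: "a < k" "v $ a \<noteq> 0" by (metis eq_vecI carrier_vecD index_zero_vec)
  have "v \<bullet> (T *\<^sub>v v) = (\<Sum>a<k. \<Sum>c<k. v $ a * T $$ (a,c) * v $ c)"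
    by (rule qf_sum[OF Tc v(1) v(1)])
  also have "\<dots> = qf n S (lift (\<lambda>a. v $ a)) (lift (\<lambda>a. v $ a))"
    by (simp add: qf_lift T_idx)
  also have "\<dots> > 0"
    by (rule qf_pos[of "pick M a"], insert a, auto simp: pick_lt lift_pick)
  finally show "v \<bullet> (T *\<^sub>v v) > 0" .
qed
lemma Tinv: "Tinv \<in> carrier_mat k k \<and> T * Tinv = 1\<^sub>m k \<and> Tinv * T = 1\<^sub>m k"
  by (rule inv_PD[OF Tc Tpd])

lemma Wc: "W \<in> carrier_mat k 1" using Tinv Uc by auto

lemma TW: "T * W = U"
proof -
  have "T * W = (T * Tinv) * U" using assoc_mult_mat[OF Tc _ Uc, of Tinv] Tinv by simp
  thus ?thesis using Tinv Uc by simp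
qed
lemma normal_pick: "a < k \<Longrightarrow> (\<Sum>c<k. S $$ (pick M a, pick M c) * W $$ (c,0)) = S $$ (pick M a, 0)"
proof -
  assume a: "a < k"
  have "(T * W) $$ (a,0) = (\<Sum>c<k. T $$ (a,c) * W $$ (c,0))"
    using mult_entry_gen[OF Tc Wc a] by simp
  hence "(\<Sum>c<k. T $$ (a,c) * W $$ (c,0)) = S $$ (pick M a, 0)" using TW U_idx a by simp
  thus ?thesis using a by (simp add: T_idx)
qed

definition b :: "nat \<Rightarrow> real" where "b = lift (\<lambda>a. W $$ (a,0))"

definition beta :: "nat \<times> nat \<Rightarrow> real" where
  "beta x = (if x \<in> m then b (fst x * p + snd x) else 0)"
lemma b_out: "r \<notin> M \<Longrightarrow> b r = 0" unfolding b_def by (rule lift_out)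

lemma b0: "b 0 = 0" using b_out zero_notin_M by simp

lemma normal: "r \<in> M \<Longrightarrow> (\<Sum>s<n. S $$ (r,s) * b s) = S $$ (r,0)"
proof -
  assume "r \<in> M"
  hence "r \<in> pick M ` {..<k}" using pick_img by simp
  then obtain a where a: "a < k" "r = pick M a" by blast
  have "(\<Sum>s<n. S $$ (r,s) * b s) = (\<Sum>s<n. b s * S $$ (r,s))" by (simp add: mult.commute)
  also have "\<dots> = (\<Sum>c<k. W $$ (c,0) * S $$ (r, pick M c))" unfolding b_def by (rule pick_sum)
  also have "\<dots> = S $$ (r,0)" using normal_pick[OF a(1)] a(2) by (simp add: mult.commute)
  finally show ?thesis .
qed
lemma beta_dv: "r < n \<Longrightarrow> beta (r div p, r mod p) = b r"
proof -
  assume r: "r < n"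
  show ?thesis
  proof (cases "(r div p, r mod p) \<in> m")
    case True thus ?thesis unfolding beta_def by simp
  next
    case False thus ?thesis unfolding beta_def using M_iff[OF r] b_out by simp
  qed
qed

lemma beta_out: "x \<notin> m \<Longrightarrow> beta x = 0" unfolding beta_def by simp

lemma av_beta: "r < n \<Longrightarrow> av p beta r = (if r = 0 then 1 else 0) - b r"
  unfolding av_def using beta_dv b0 by auto

end



lemma qf_cong: "(\<And>r. r < n \<Longrightarrow> x r = x' r) \<Longrightarrow> (\<And>r. r < n \<Longrightarrow> y r = y' r) \<Longrightarrow> qf n A x y = qf n A x' y'"
  unfolding qf_def by (intro sum.cong) auto

lemma qf_row: "qf n A x y = (\<Sum>i<n. x i * (\<Sum>j<n. A $$ (i,j) * y j))"
  unfolding qf_def by (simp add: sum_distrib_left mult.assoc)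

context L begin

lemma gres: "r \<in> M \<Longrightarrow> (\<Sum>s<n. S $$ (r,s) * av p beta s) = 0"
proof -
  assume r: "r \<in> M"
  have "(\<Sum>s<n. S $$ (r,s) * av p beta s) = (\<Sum>s<n. S $$ (r,s) * ((if s = 0 then 1 else 0) - b s))"
    by (rule sum.cong, auto simp: av_beta)
  also have "\<dots> = (\<Sum>s<n. (if s = 0 then S $$ (r,s) else 0) - S $$ (r,s) * b s)"
    by (rule sum.cong) (auto simp: algebra_simps)
  also have "\<dots> = (\<Sum>s<n. (if s = 0 then S $$ (r,s) else 0)) - (\<Sum>s<n. S $$ (r,s) * b s)"
    by (rule sum_subtractf)
  also have "\<dots> = S $$ (r,0) - S $$ (r,0)" using p0 normal[OF r] by simp
  finally show ?thesis by simp
qed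

lemma qf_d_beta: assumes "\<And>r. r < n \<Longrightarrow> r \<notin> M \<Longrightarrow> d r = 0" shows "qf n S d (av p beta) = 0"
  unfolding qf_row using assms gres by (intro sum.neutral) auto

definition dd :: "(nat \<times> nat \<Rightarrow> real) \<Rightarrow> nat \<Rightarrow> real" where
  "dd t r = t (r div p, r mod p) - b r"

lemma gamma_decomp: assumes t: "\<forall>x. x \<notin> m \<longrightarrow> t x = 0"
  shows "gamma p s2 \<theta> t = gamma p s2 \<theta> beta + qf n S (dd t) (dd t)"
proof -
  have t00: "t (0,0) = 0" using t m_sub by auto
  have e: "\<And>r. r < n \<Longrightarrow> av p t r = av p beta r - dd t r"
    unfolding av_def dd_def using beta_dv b0 t00 by auto
  have dz: "\<And>r. r < n \<Longrightarrow> r \<notin> M \<Longrightarrow> dd t r = 0"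
    unfolding dd_def using M_iff t b_out by auto
  have "gamma p s2 \<theta> t = qf n S (\<lambda>r. av p beta r - dd t r) (\<lambda>r. av p beta r - dd t r)"
    unfolding gamma_qf by (rule qf_cong; simp add: e)
  also have "\<dots> = gamma p s2 \<theta> beta + qf n S (dd t) (dd t)"
    unfolding qf_diff gamma_qf using qf_d_beta[OF dz] Ssym_qf[of "dd t" "av p beta"] by simp
  finally show ?thesis .
qed

lemma beta_F: "\<forall>x. x \<notin> m \<longrightarrow> beta x = 0" using beta_out by simp

lemma beta_min: "\<forall>x. x \<notin> m \<longrightarrow> t x = 0 \<Longrightarrow> gamma p s2 \<theta> beta \<le> gamma p s2 \<theta> t"
  using gamma_decomp qf_nonneg by (metis le_add_same_cancel1)

lemma beta_uniq: assumes t: "\<forall>x. x \<notin> m \<longrightarrow> t x = 0" and le: "gamma p s2 \<theta> t \<le> gamma p s2 \<theta> beta"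
  shows "t = beta"
proof
  fix x
  have z: "qf n S (dd t) (dd t) \<le> 0" using gamma_decomp[OF t] le by simp
  have dz: "\<And>r. r < n \<Longrightarrow> dd t r = 0"
  proof (rule ccontr)
    fix r assume "r < n" "dd t r \<noteq> 0"
    from qf_pos[of r "dd t", OF this] z show False by simp
  qed
  show "t x = beta x"
  proof (cases "x \<in> Lam p")
    case True
    obtain i j where x: "x = (i,j)" by (cases x)
    have r: "i*p+j < n" using idx_lt True x by simp
    have dv: "(i*p+j) div p = i" "(i*p+j) mod p = j" using idx_dv True x by auto
    from dz[OF r] have "t (i,j) = b (i*p+j)" unfolding dd_def dv by simp
    also have "\<dots> = beta (i,j)" using beta_dv[OF r] dv by simp
    finally show ?thesis using x by simp
  next
    case False
    hence "x \<notin> m" using m_sub by auto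
    thus ?thesis using t beta_out by metis
  qed
qed

definition vv :: "nat \<Rightarrow> real" where "vv r = (\<Sum>s<n. K $$ (r,s) * av p beta s)"

lemma Qvv: "r < n \<Longrightarrow> (\<Sum>s<n. Q $$ (r,s) * vv s) = av p beta r"
proof -
  assume r: "r < n"
  have "(\<Sum>s<n. Q $$ (r,s) * vv s) = (\<Sum>s<n. \<Sum>t<n. Q $$ (r,s) * K $$ (s,t) * av p beta t)"
    unfolding vv_def by (simp add: sum_distrib_left mult.assoc)
  also have "\<dots> = (\<Sum>t<n. (\<Sum>s<n. Q $$ (r,s) * K $$ (s,t)) * av p beta t)"
    by (subst sum.swap) (simp add: sum_distrib_right)
  also have "\<dots> = (\<Sum>t<n. (Q * K) $$ (r,t) * av p beta t)"
    using mat_mult_entry[OF Qc Kc r] by simp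
  also have "\<dots> = (\<Sum>t<n. (if r = t then av p beta t else 0))"
    using Kinv r by (intro sum.cong) auto
  also have "\<dots> = av p beta r" using r by simp
  finally show ?thesis .
qed

lemma vv_M: "r \<in> M \<Longrightarrow> vv r = 0"
proof -
  assume r: "r \<in> M"
  have "s2 * vv r = (\<Sum>s<n. S $$ (r,s) * av p beta s)"
    unfolding vv_def using M_lt[OF r] by (simp add: S_idx sum_distrib_left mult.assoc)
  thus ?thesis using gres[OF r] s2 by simp
qed

lemma E_eq: "r < n \<Longrightarrow> av p beta r = vv r - (\<Sum>s<n. cf p \<theta> r s * vv s)"
proof -
  assume r: "r < n"
  have "av p beta r = (\<Sum>s<n. ((if r = s then 1 else 0) - cf p \<theta> r s) * vv s)"
    unfolding Qvv[OF r, symmetric] by (rule sum.cong) (auto simp: Q_idx r)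
  also have "\<dots> = (\<Sum>s<n. (if r = s then vv s else 0) - cf p \<theta> r s * vv s)"
    by (rule sum.cong) (auto simp: algebra_simps)
  also have "\<dots> = (\<Sum>s<n. (if r = s then vv s else 0)) - (\<Sum>s<n. cf p \<theta> r s * vv s)"
    by (rule sum_subtractf)
  finally show ?thesis using r by simp
qed

lemma abs_sum_le: "\<bar>\<Sum>s<n. cf p \<theta> r s * vv s\<bar> \<le> (\<Sum>s<n. \<bar>cf p \<theta> r s\<bar> * \<bar>vv s\<bar>)"
  by (rule order_trans[OF sum_abs], simp add: abs_mult)

lemma norm1_beta: "norm1 p beta \<le> norm1 p \<theta>"
proof -
  define R where "R = norm1 p \<theta>"
  define A0 where "A0 = {..<n} - {0}"
  define P where "P = (\<Sum>s<n. \<bar>cf p \<theta> 0 s\<bar> * \<bar>vv s\<bar>)"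
  have R0: "0 \<le> R" unfolding R_def norm1_def by (simp add: sum_nonneg)
  have R1': "R < 1" unfolding R_def by (rule R1)
  have n0: "0 < n" using p0 by simp
  have fin: "finite A0" unfolding A0_def by simp
  have key: "\<And>r. r \<in> A0 \<Longrightarrow> \<bar>b r\<bar> + \<bar>vv r\<bar> \<le> (\<Sum>s<n. \<bar>cf p \<theta> r s\<bar> * \<bar>vv s\<bar>)"
  proof -
    fix r assume "r \<in> A0"
    hence r: "r < n" "r \<noteq> 0" unfolding A0_def by auto
    have avr: "av p beta r = - b r" using av_beta[OF r(1)] r(2) by simp
    show "\<bar>b r\<bar> + \<bar>vv r\<bar> \<le> (\<Sum>s<n. \<bar>cf p \<theta> r s\<bar> * \<bar>vv s\<bar>)"
    proof (cases "r \<in> M")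
      case True
      hence "vv r = 0" by (rule vv_M)
      hence "\<bar>b r\<bar> = \<bar>\<Sum>s<n. cf p \<theta> r s * vv s\<bar>" using E_eq[OF r(1)] avr by simp
      thus ?thesis using abs_sum_le[of r] \<open>vv r = 0\<close> by simp
    next
      case False
      hence "b r = 0" by (rule b_out)
      hence "vv r = (\<Sum>s<n. cf p \<theta> r s * vv s)" using E_eq[OF r(1)] avr by simp
      thus ?thesis using abs_sum_le[of r] \<open>b r = 0\<close> by simp
    qed
  qed
  have colA0: "\<And>s. s < n \<Longrightarrow> (\<Sum>r\<in>A0. \<bar>cf p \<theta> r s\<bar>) = R - \<bar>cf p \<theta> 0 s\<bar>"
  proof -
    fix s assume s: "s < n"
    have "(\<Sum>r<n. \<bar>cf p \<theta> r s\<bar>) = R" unfolding R_def norm1_def by (rule cf_colsum[OF p0 s])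
    moreover have "(\<Sum>r<n. \<bar>cf p \<theta> r s\<bar>) = \<bar>cf p \<theta> 0 s\<bar> + (\<Sum>r\<in>A0. \<bar>cf p \<theta> r s\<bar>)"
      unfolding A0_def using n0 by (subst sum.remove[of _ 0]) auto
    ultimately show "(\<Sum>r\<in>A0. \<bar>cf p \<theta> r s\<bar>) = R - \<bar>cf p \<theta> 0 s\<bar>" by simp
  qed
  have "(\<Sum>r\<in>A0. \<bar>b r\<bar>) + (\<Sum>r\<in>A0. \<bar>vv r\<bar>) \<le> (\<Sum>r\<in>A0. \<Sum>s<n. \<bar>cf p \<theta> r s\<bar> * \<bar>vv s\<bar>)"
    unfolding sum.distrib[symmetric] by (rule sum_mono, rule key)
  also have "\<dots> = (\<Sum>s<n. (\<Sum>r\<in>A0. \<bar>cf p \<theta> r s\<bar>) * \<bar>vv s\<bar>)"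
    by (subst sum.swap) (simp add: sum_distrib_right)
  also have "\<dots> = (\<Sum>s<n. (R - \<bar>cf p \<theta> 0 s\<bar>) * \<bar>vv s\<bar>)"
    by (rule sum.cong, auto simp: colA0)
  also have "\<dots> = R * (\<Sum>s<n. \<bar>vv s\<bar>) - P"
    unfolding P_def by (simp add: left_diff_distrib sum_subtractf sum_distrib_left)
  finally have ineq: "(\<Sum>r\<in>A0. \<bar>b r\<bar>) + (\<Sum>r\<in>A0. \<bar>vv r\<bar>) \<le> R * (\<Sum>s<n. \<bar>vv s\<bar>) - P" .
  have splitv: "(\<Sum>s<n. \<bar>vv s\<bar>) = \<bar>vv 0\<bar> + (\<Sum>r\<in>A0. \<bar>vv r\<bar>)"
    unfolding A0_def using n0 by (subst sum.remove[of _ 0]) auto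
  have splitb: "(\<Sum>s<n. \<bar>b s\<bar>) = \<bar>b 0\<bar> + (\<Sum>r\<in>A0. \<bar>b r\<bar>)"
    unfolding A0_def using n0 by (subst sum.remove[of _ 0]) auto
  have SA0: "(\<Sum>r\<in>A0. \<bar>vv r\<bar>) \<ge> 0" by (simp add: sum_nonneg)
  have P0: "P \<ge> 0" unfolding P_def by (simp add: sum_nonneg)
  have SM: "(\<Sum>r\<in>A0. \<bar>b r\<bar>) \<le> R * \<bar>vv 0\<bar> - P"
  proof -
    define X where "X = (\<Sum>r\<in>A0. \<bar>vv r\<bar>)"
    have "(R - 1) * X \<le> 0" using SA0 R1' unfolding X_def by (simp add: mult_nonpos_nonneg)
    moreover have "R * (\<Sum>s<n. \<bar>vv s\<bar>) = R * \<bar>vv 0\<bar> + R * X" unfolding splitv X_def by (simp add: distrib_left)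
    moreover have "(R - 1) * X = R * X - X" by (simp add: left_diff_distrib)
    ultimately show ?thesis using ineq splitv unfolding X_def by linarith
  qed
  have e0: "1 = vv 0 - (\<Sum>s<n. cf p \<theta> 0 s * vv s)" using E_eq[OF n0] av_beta[OF n0] b0 by simp
  have "\<bar>\<Sum>s<n. cf p \<theta> 0 s * vv s\<bar> \<le> P" unfolding P_def by (rule abs_sum_le)
  hence v0: "1 - P \<le> vv 0" "vv 0 \<le> 1 + P" using e0 by linarith+
  have "(\<Sum>r\<in>A0. \<bar>b r\<bar>) \<le> R"
  proof (cases "vv 0 \<ge> 0")
    case True
    hence "R * \<bar>vv 0\<bar> \<le> R * (1 + P)" using v0 R0 by (simp add: mult_left_mono)
    moreover have "R * P \<le> P" using R1' P0 R0 by (simp add: mult_left_le_one_le)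
    ultimately show ?thesis using SM by (simp add: algebra_simps)
  next
    case False
    hence "R * \<bar>vv 0\<bar> \<le> \<bar>vv 0\<bar>" using R1' R0 by (simp add: mult_left_le_one_le)
    thus ?thesis using SM v0 False R0 by linarith
  qed
  moreover have "norm1 p beta = (\<Sum>s<n. \<bar>b s\<bar>)"
    unfolding norm1_def sum_dv[of "\<lambda>x. \<bar>beta x\<bar>" p, symmetric] by (rule sum.cong, auto simp: beta_dv)
  ultimately show ?thesis using splitb b0 unfolding R_def by simp
qed

end



definition ng :: "nat \<Rightarrow> bool \<Rightarrow> nat \<Rightarrow> nat" where
  "ng p s a = (if s then md p (- int a) else a)"

definition gmap :: "nat \<Rightarrow> bool \<Rightarrow> bool \<Rightarrow> bool \<Rightarrow> nat \<times> nat \<Rightarrow> nat \<times> nat" where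
  "gmap p sw s1 s2 x = (if sw then (ng p s1 (snd x), ng p s2 (fst x)) else (ng p s1 (fst x), ng p s2 (snd x)))"

lemma ng_lt: "0 < p \<Longrightarrow> a < p \<Longrightarrow> ng p s a < p"
  unfolding ng_def using md_lt by auto

lemma ng_ng: assumes p: "0 < p" and a: "a < p" shows "ng p s (ng p s a) = a"
proof (cases s)
  case True
  have "md p (- int (md p (- int a))) = md p (- (- int a))" by (rule md_neg_md[OF p])
  thus ?thesis using True a unfolding ng_def by (simp add: md_nat)
qed (simp add: ng_def)

lemma ng0: "ng p s 0 = 0" unfolding ng_def md_def by simp

lemma ng_lin: assumes p: "0 < p" and x: "x < p" and y: "y < p"
  shows "ng p s (md p (int y - int x)) = md p (int (ng p s y) - int (ng p s x))"
proof (cases s)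
  case False
  thus ?thesis unfolding ng_def by simp
next
  case True
  have "(- int (md p (int y - int x))) mod int p = (int (md p (- int y)) - int (md p (- int x))) mod int p"
  proof -
    have "(- ((int y - int x) mod int p)) mod int p = (- (int y - int x)) mod int p" by (rule mod_minus_eq)
    also have "\<dots> = (- int y - - int x) mod int p" by simp
    also have "\<dots> = ((- int y) mod int p - (- int x) mod int p) mod int p" by (rule mod_diff_eq[symmetric])
    finally show ?thesis unfolding int_md[OF p] .
  qed
  thus ?thesis using True unfolding ng_def md_def by simp
qed

lemma ng_min: assumes p: "0 < p" and a: "a < p" shows "min (ng p s a) (p - ng p s a) = min a (p - a)"
proof (cases "s \<and> a \<noteq> 0")
  case True
  have "int a mod int p = int a" using a by simp
  hence "(- int a) mod int p = int p - int a" using True a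
    using zmod_zminus1_eq_if[of "int a" "int p"] by simp
  hence "md p (- int a) = p - a" unfolding md_def using a by simp
  thus ?thesis using True a unfolding ng_def by auto
next
  case False
  thus ?thesis unfolding ng_def using ng0[of p True] unfolding ng_def by auto
qed

lemma ng_inj: "0 < p \<Longrightarrow> a < p \<Longrightarrow> b < p \<Longrightarrow> ng p s a = ng p s b \<Longrightarrow> a = b"
  by (metis ng_ng)

lemma gmap_Lam: "0 < p \<Longrightarrow> x \<in> Lam p \<Longrightarrow> gmap p sw s1 s2 x \<in> Lam p"
  unfolding gmap_def Lam_def using ng_lt by auto

lemma gmap_inj: assumes p: "0 < p" shows "inj_on (gmap p sw s1 s2) (Lam p)"
proof (rule inj_onI)
  fix x y assume x: "x \<in> Lam p" and y: "y \<in> Lam p" and e: "gmap p sw s1 s2 x = gmap p sw s1 s2 y"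
  obtain x1 x2 where xx: "x = (x1,x2)" by (cases x)
  obtain y1 y2 where yy: "y = (y1,y2)" by (cases y)
  have b: "x1 < p" "x2 < p" "y1 < p" "y2 < p" using x y xx yy unfolding Lam_def by auto
  show "x = y"
  proof (cases sw)
    case True
    hence "ng p s1 x2 = ng p s1 y2" "ng p s2 x1 = ng p s2 y1" using e xx yy unfolding gmap_def by auto
    thus ?thesis using ng_inj[OF p] b xx yy by blast
  next
    case False
    hence "ng p s1 x1 = ng p s1 y1" "ng p s2 x2 = ng p s2 y2" using e xx yy unfolding gmap_def by auto
    thus ?thesis using ng_inj[OF p] b xx yy by blast
  qed
qed

lemma gmap0: "gmap p sw s1 s2 (0,0) = (0,0)"
  unfolding gmap_def using ng0 by simp

lemma gmap_lin: assumes p: "0 < p" and x: "x \<in> Lam p" and y: "y \<in> Lam p"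
  shows "gmap p sw s1 s2 (md p (int (fst y) - int (fst x)), md p (int (snd y) - int (snd x)))
    = (md p (int (fst (gmap p sw s1 s2 y)) - int (fst (gmap p sw s1 s2 x))),
       md p (int (snd (gmap p sw s1 s2 y)) - int (snd (gmap p sw s1 s2 x))))"
  using x y unfolding gmap_def Lam_def by (auto simp: ng_lin[OF p])

lemma gmap_tnorm: assumes p: "0 < p" and x: "x \<in> Lam p"
  shows "tnorm2 p (gmap p sw s1 s2 x) = tnorm2 p x"
  using x unfolding gmap_def Lam_def tnorm2_def by (auto simp: ng_min[OF p])

lemma gmap_mball: assumes p: "0 < p" and x: "x \<in> Lam p"
  shows "gmap p sw s1 s2 x \<in> mball p r \<longleftrightarrow> x \<in> mball p r"
proof -
  have "gmap p sw s1 s2 x = (0,0) \<longleftrightarrow> x = (0,0)"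
    using gmap_inj[OF p] gmap0 x inj_onD[of "gmap p sw s1 s2" "Lam p" x "(0,0)"]
    by (metis Lam_def SigmaI atLeastLessThan_iff le0 p)
  thus ?thesis unfolding mball_def using gmap_Lam[OF p x] gmap_tnorm[OF p x] x by auto
qed

lemma G_iso_gmap: "g \<in> G_iso p \<Longrightarrow> \<exists>sw s1 s2. g = gmap p sw s1 s2"
  unfolding G_iso_def Let_def
  apply (elim insertE emptyE)
  apply (rule exI[of _ False], rule exI[of _ False], rule exI[of _ False], force simp: gmap_def ng_def)
  apply (rule exI[of _ True], rule exI[of _ False], rule exI[of _ False], force simp: gmap_def ng_def)
  apply (rule exI[of _ False], rule exI[of _ True], rule exI[of _ False], force simp: gmap_def ng_def)
  apply (rule exI[of _ False], rule exI[of _ False], rule exI[of _ True], force simp: gmap_def ng_def)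
  apply (rule exI[of _ False], rule exI[of _ True], rule exI[of _ True], force simp: gmap_def ng_def)
  apply (rule exI[of _ True], rule exI[of _ False], rule exI[of _ True], force simp: gmap_def ng_def)
  apply (rule exI[of _ True], rule exI[of _ True], rule exI[of _ False], force simp: gmap_def ng_def)
  apply (rule exI[of _ True], rule exI[of _ True], rule exI[of _ True], force simp: gmap_def ng_def)
  done

context L begin

definition pig :: "(nat \<times> nat \<Rightarrow> nat \<times> nat) \<Rightarrow> nat \<Rightarrow> nat" where
  "pig g r = fst (g (r div p, r mod p)) * p + snd (g (r div p, r mod p))"

lemma idx_inj: "x \<in> Lam p \<Longrightarrow> y \<in> Lam p \<Longrightarrow> fst x * p + snd x = fst y * p + snd y \<Longrightarrow> x = y"
  by (metis idx_dv prod.collapse)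

lemma pig_dv:
  assumes G1: "\<And>x. x \<in> Lam p \<Longrightarrow> g x \<in> Lam p" and r: "r < n"
  shows "(pig g r div p, pig g r mod p) = g (r div p, r mod p)"
  unfolding pig_def using G1[OF dv_Lam[OF r]] idx_dv by (metis prod.collapse)

lemma pig_bij:
  assumes G1: "\<And>x. x \<in> Lam p \<Longrightarrow> g x \<in> Lam p" and G2: "inj_on g (Lam p)"
  shows "bij_betw (pig g) {..<n} {..<n}"
proof -
  have lt: "\<And>r. r < n \<Longrightarrow> pig g r < n"
    unfolding pig_def using G1 dv_Lam idx_lt by (metis prod.collapse)
  have inj: "inj_on (pig g) {..<n}"
  proof (rule inj_onI)
    fix r s assume r: "r \<in> {..<n}" and s: "s \<in> {..<n}" and e: "pig g r = pig g s"
    hence "g (r div p, r mod p) = g (s div p, s mod p)" using pig_dv[of g, OF G1] by (metis lessThan_iff)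
    hence "(r div p, r mod p) = (s div p, s mod p)" using G2 dv_Lam r s by (meson inj_onD lessThan_iff)
    thus "r = s" by (metis div_mult_mod_eq prod.inject)
  qed
  have sub: "pig g ` {..<n} \<subseteq> {..<n}" using lt by auto
  show ?thesis
    unfolding bij_betw_def using inj endo_inj_surj[OF finite_lessThan sub inj] by simp
qed

lemma S_perm:
  assumes G1: "\<And>x. x \<in> Lam p \<Longrightarrow> g x \<in> Lam p" and G2: "inj_on g (Lam p)"
    and G4: "\<And>x y. x \<in> Lam p \<Longrightarrow> y \<in> Lam p \<Longrightarrow> g (md p (int (fst y) - int (fst x)), md p (int (snd y) - int (snd x)))
         = (md p (int (fst (g y)) - int (fst (g x))), md p (int (snd (g y)) - int (snd (g x))))"
    and G5: "\<And>x. x \<in> Lam p \<Longrightarrow> \<theta> (g x) = \<theta> x"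
    and rs: "r < n" "s < n"
  shows "S $$ (pig g r, pig g s) = S $$ (r,s)"
proof -
  have pp1: "bij_betw (pig g) {..<n} {..<n}" by (rule pig_bij[of g, OF G1 G2])
  have pp2: "\<And>r. r < n \<Longrightarrow> (pig g r div p, pig g r mod p) = g (r div p, r mod p)" by (rule pig_dv[of g, OF G1])
  have Qp: "\<And>r s. r < n \<Longrightarrow> s < n \<Longrightarrow> Q $$ (pig g r, pig g s) = Q $$ (r,s)"
  proof -
    fix r s assume r: "r < n" and s: "s < n"
    have pr: "pig g r < n" "pig g s < n" using pp1 r s unfolding bij_betw_def by auto
    have eq: "pig g r = pig g s \<longleftrightarrow> r = s" using pp1 r s unfolding bij_betw_def inj_on_def by auto
    have L: "(md p (int (s div p) - int (r div p)), md p (int (s mod p) - int (r mod p))) \<in> Lam p"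
      using md_lt[OF p0] unfolding Lam_def by auto
    have "cf p \<theta> (pig g r) (pig g s) = \<theta> (g (md p (int (s div p) - int (r div p)), md p (int (s mod p) - int (r mod p))))"
      unfolding cf_def using pp2[OF r] pp2[OF s] G4[OF dv_Lam[OF r] dv_Lam[OF s]]
      by (metis fst_conv snd_conv)
    also have "\<dots> = cf p \<theta> r s" unfolding cf_def using G5[OF L] .
    finally show "Q $$ (pig g r, pig g s) = Q $$ (r,s)" using Q_idx pr r s eq by simp
  qed
  have "K $$ (pig g r, pig g s) = K $$ (r,s)"
    by (rule inv_perm[OF Qc Kc _ _ pp1 Qp rs], insert Kinv, auto)
  moreover have "pig g r < n" "pig g s < n" using rs pp1 unfolding bij_betw_def by auto
  ultimately show ?thesis using rs S_idx by simp
qed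

lemma beta_inv:
  assumes G1: "\<And>x. x \<in> Lam p \<Longrightarrow> g x \<in> Lam p" and G2: "inj_on g (Lam p)" and G3: "g (0,0) = (0,0)"
    and G4: "\<And>x y. x \<in> Lam p \<Longrightarrow> y \<in> Lam p \<Longrightarrow> g (md p (int (fst y) - int (fst x)), md p (int (snd y) - int (snd x)))
         = (md p (int (fst (g y)) - int (fst (g x))), md p (int (snd (g y)) - int (snd (g x))))"
    and G5: "\<And>x. x \<in> Lam p \<Longrightarrow> \<theta> (g x) = \<theta> x"
    and G6: "\<And>x. x \<in> Lam p \<Longrightarrow> g x \<in> m \<longleftrightarrow> x \<in> m"
    and x: "x \<in> Lam p"
  shows "beta (g x) = beta x"
proof -
  have pp1: "bij_betw (pig g) {..<n} {..<n}" by (rule pig_bij[of g, OF G1 G2])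
  have pp2: "\<And>r. r < n \<Longrightarrow> (pig g r div p, pig g r mod p) = g (r div p, r mod p)" by (rule pig_dv[of g, OF G1])
  define tg where "tg = (\<lambda>x. if x \<in> Lam p then beta (g x) else 0)"
  define a where "a = av p beta"
  have pin: "\<And>r. r < n \<Longrightarrow> pig g r < n" using pp1 unfolding bij_betw_def by auto
  have pig0: "pig g 0 = 0" unfolding pig_def using G3 by simp
  have avg: "\<And>r. r < n \<Longrightarrow> av p tg r = a (pig g r)"
  proof -
    fix r assume r: "r < n"
    show "av p tg r = a (pig g r)"
    proof (cases "r = 0")
      case True thus ?thesis unfolding a_def av_def using pig0 by simp
    next
      case False
      have "pig g r \<noteq> 0" using pp1 r False pig0 p0 unfolding bij_betw_def inj_on_def
        by (metis lessThan_iff mult_pos_pos)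
      thus ?thesis unfolding a_def av_def tg_def using False pp2[OF r] dv_Lam[OF r] by simp
    qed
  qed
  have "gamma p s2 \<theta> tg = (\<Sum>r<n. \<Sum>s<n. a (pig g r) * S $$ (r,s) * a (pig g s))"
    unfolding gamma_qf qf_def by (intro sum.cong) (auto simp: avg)
  also have "\<dots> = (\<Sum>r<n. \<Sum>s<n. a (pig g r) * S $$ (pig g r, pig g s) * a (pig g s))"
    by (intro sum.cong) (auto simp: S_perm[OF G1 G2 G4 G5])
  also have "\<dots> = (\<Sum>r<n. \<Sum>s<n. a (pig g r) * S $$ (pig g r, s) * a s)"
    by (rule sum.cong[OF refl], rule sum.reindex_bij_betw[OF pp1, of "\<lambda>s. a (pig g _) * S $$ (pig g _, s) * a s"])
  also have "\<dots> = (\<Sum>r<n. \<Sum>s<n. a r * S $$ (r, s) * a s)"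
    by (rule sum.reindex_bij_betw[OF pp1, of "\<lambda>r. \<Sum>s<n. a r * S $$ (r, s) * a s"])
  also have "\<dots> = gamma p s2 \<theta> beta" unfolding gamma_qf qf_def a_def ..
  finally have ge: "gamma p s2 \<theta> tg = gamma p s2 \<theta> beta" .
  have tF: "\<forall>x. x \<notin> m \<longrightarrow> tg x = 0" unfolding tg_def using G6 beta_out by auto
  have "tg = beta" using beta_uniq[OF tF] ge by simp
  hence "tg x = beta x" by simp
  thus ?thesis using x unfolding tg_def by simp
qed

lemma beta_gmap:
  assumes G5: "\<And>x. x \<in> Lam p \<Longrightarrow> \<theta> (gmap p sw sa sb x) = \<theta> x" and x: "x \<in> Lam p"
  shows "beta (gmap p sw sa sb x) = beta x"
proof (rule beta_inv[OF gmap_Lam[OF p0] gmap_inj[OF p0] gmap0 gmap_lin[OF p0] G5 _ x])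
  fix y assume y: "y \<in> Lam p"
  obtain r where "m = mball p r" using mM unfolding M1_def by auto
  thus "gmap p sw sa sb y \<in> m \<longleftrightarrow> y \<in> m" using gmap_mball[OF p0 y] by simp
qed (auto)

end




lemma cf_quad_bound:
  assumes p: "0 < p"
  shows "\<bar>\<Sum>r<p*p. \<Sum>s<p*p. x r * cf p f r s * x s\<bar> \<le> norm1 p f * (\<Sum>r<p*p. (x r)^2)"
proof -
  let ?n = "p*p"
  define c where "c = cf p f"
  have row: "\<And>r. r < ?n \<Longrightarrow> (\<Sum>s<?n. \<bar>c r s\<bar>) = norm1 p f"
    unfolding c_def norm1_def using cf_rowsum[OF p, of _ abs f] by simp
  have col: "\<And>s. s < ?n \<Longrightarrow> (\<Sum>r<?n. \<bar>c r s\<bar>) = norm1 p f"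
    unfolding c_def norm1_def using cf_colsum[OF p, of _ abs f] by simp
  have "\<bar>\<Sum>r<?n. \<Sum>s<?n. x r * c r s * x s\<bar> \<le> (\<Sum>r<?n. \<bar>\<Sum>s<?n. x r * c r s * x s\<bar>)"
    by (rule sum_abs)
  also have "\<dots> \<le> (\<Sum>r<?n. \<Sum>s<?n. \<bar>x r * c r s * x s\<bar>)"
    by (intro sum_mono sum_abs)
  also have "\<dots> \<le> (\<Sum>r<?n. \<Sum>s<?n. (x r)^2 / 2 * \<bar>c r s\<bar> + (x s)^2 / 2 * \<bar>c r s\<bar>)"
  proof (intro sum_mono)
    fix r s
    have "\<bar>x r\<bar> * \<bar>x s\<bar> \<le> ((x r)^2 + (x s)^2) / 2"
    proof -
      have h: "(\<bar>x r\<bar> - \<bar>x s\<bar>)^2 = (x r)^2 + (x s)^2 - 2*(\<bar>x r\<bar>*\<bar>x s\<bar>)"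
        by (simp add: power2_diff power2_abs)
      have "0 \<le> (\<bar>x r\<bar> - \<bar>x s\<bar>)^2" by simp
      hence "2*(\<bar>x r\<bar>*\<bar>x s\<bar>) \<le> (x r)^2 + (x s)^2" unfolding h by linarith
      thus ?thesis by (simp add: field_simps)
    qed
    hence "\<bar>c r s\<bar> * (\<bar>x r\<bar> * \<bar>x s\<bar>) \<le> \<bar>c r s\<bar> * (((x r)^2 + (x s)^2) / 2)"
      by (rule mult_left_mono) simp
    thus "\<bar>x r * c r s * x s\<bar> \<le> (x r)^2 / 2 * \<bar>c r s\<bar> + (x s)^2 / 2 * \<bar>c r s\<bar>"
      by (simp add: abs_mult algebra_simps add_divide_distrib)
  qed
  also have "\<dots> = (\<Sum>r<?n. \<Sum>s<?n. (x r)^2 / 2 * \<bar>c r s\<bar>) + (\<Sum>r<?n. \<Sum>s<?n. (x s)^2 / 2 * \<bar>c r s\<bar>)"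
    by (simp add: sum.distrib)
  also have "(\<Sum>r<?n. \<Sum>s<?n. (x r)^2 / 2 * \<bar>c r s\<bar>) = (\<Sum>r<?n. (x r)^2 / 2 * (\<Sum>s<?n. \<bar>c r s\<bar>))"
    by (rule sum.cong[OF refl], rule sum_distrib_left[symmetric])
  also have "\<dots> = (\<Sum>r<?n. (x r)^2 / 2 * norm1 p f)" by (rule sum.cong, auto simp: row)
  also have "(\<Sum>r<?n. \<Sum>s<?n. (x s)^2 / 2 * \<bar>c r s\<bar>) = (\<Sum>s<?n. \<Sum>r<?n. (x s)^2 / 2 * \<bar>c r s\<bar>)"
    by (rule sum.swap)
  also have "\<dots> = (\<Sum>s<?n. (x s)^2 / 2 * (\<Sum>r<?n. \<bar>c r s\<bar>))"
    by (rule sum.cong[OF refl], rule sum_distrib_left[symmetric])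
  also have "\<dots> = (\<Sum>s<?n. (x s)^2 / 2 * norm1 p f)" by (rule sum.cong, auto simp: col)
  also have "(\<Sum>r<?n. (x r)^2 / 2 * norm1 p f) + (\<Sum>s<?n. (x s)^2 / 2 * norm1 p f) = norm1 p f * (\<Sum>r<?n. (x r)^2)"
    by (simp add: sum_distrib_left sum.distrib[symmetric] algebra_simps)
  finally show ?thesis unfolding c_def .
qed

lemma IminusC_quad:
  assumes "v \<in> carrier_vec (p*p)"
  shows "v \<bullet> (IminusC p f *\<^sub>v v) = (\<Sum>r<p*p. (v $ r)^2) - (\<Sum>r<p*p. \<Sum>s<p*p. v $ r * cf p f r s * v $ s)"
proof -
  have "v \<bullet> (IminusC p f *\<^sub>v v) = (\<Sum>r<p*p. \<Sum>s<p*p. v $ r * IminusC p f $$ (r,s) * v $ s)"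
    by (rule qf_sum[OF IminusC_carrier assms assms])
  also have "\<dots> = (\<Sum>r<p*p. \<Sum>s<p*p. (if r = s then v $ r * v $ s else 0) - v $ r * cf p f r s * v $ s)"
    by (intro sum.cong) (auto simp: IminusC_index algebra_simps)
  also have "\<dots> = (\<Sum>r<p*p. (v $ r)^2) - (\<Sum>r<p*p. \<Sum>s<p*p. v $ r * cf p f r s * v $ s)"
    by (simp add: sum_subtractf power2_eq_square)
  finally show ?thesis .
qed

lemma vec_nonzero_sq: fixes v :: "real vec" shows "v \<in> carrier_vec n \<Longrightarrow> v \<noteq> 0\<^sub>v n \<Longrightarrow> (\<Sum>r<n. (v $ r)^2) > (0::real)"
proof -
  assume v: "v \<in> carrier_vec n" "v \<noteq> 0\<^sub>v n"
  then obtain r where r: "r < n" "v $ r \<noteq> 0" by (metis eq_vecI carrier_vecD index_zero_vec)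
  have "(\<Sum>r<n. (v $ r)^2) \<ge> (v $ r)^2"
    using r by (intro member_le_sum) auto
  moreover have "(v $ r)^2 > 0" using r by simp
  ultimately show ?thesis by linarith
qed

lemma IminusC_pd:
  assumes p: "0 < p" and R: "norm1 p f < 1"
  shows "pos_def_mat (IminusC p f)"
  unfolding pos_def_mat_def
proof (intro conjI ballI impI)
  show "IminusC p f \<in> carrier_mat (dim_row (IminusC p f)) (dim_row (IminusC p f))"
    using IminusC_carrier[of p f] by simp
  fix v :: "real vec" assume v: "v \<in> carrier_vec (dim_row (IminusC p f))" "v \<noteq> 0\<^sub>v (dim_row (IminusC p f))"
  have d: "dim_row (IminusC p f) = p*p" using IminusC_carrier[of p f] by simp
  have pos: "(\<Sum>r<p*p. (v $ r)^2) > 0" using vec_nonzero_sq v unfolding d by blast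
  have "norm1 p f * (\<Sum>r<p*p. (v $ r)^2) < (\<Sum>r<p*p. (v $ r)^2)" using R pos by simp
  thus "v \<bullet> (IminusC p f *\<^sub>v v) > 0"
    using IminusC_quad[of v p f] v cf_quad_bound[OF p, of "\<lambda>r. v $ r" f] unfolding d by linarith
qed

lemma IminusC_eig_bound:
  assumes p: "0 < p" and ev: "eigenvalue (IminusC p f) l"
  shows "l \<le> 1 + norm1 p f"
proof -
  obtain v where v: "eigenvector (IminusC p f) v l" using ev unfolding eigenvalue_def by blast
  have d: "dim_row (IminusC p f) = p*p" using IminusC_carrier[of p f] by simp
  have vc: "v \<in> carrier_vec (p*p)" "v \<noteq> 0\<^sub>v (p*p)" "IminusC p f *\<^sub>v v = l \<cdot>\<^sub>v v"
    using v unfolding eigenvector_def d by auto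
  have pos: "(\<Sum>r<p*p. (v $ r)^2) > 0" using vec_nonzero_sq vc by blast
  have "v \<bullet> (IminusC p f *\<^sub>v v) = l * (v \<bullet> v)" using vc by simp
  also have "v \<bullet> v = (\<Sum>r<p*p. (v $ r)^2)" using vc by (simp add: scalar_prod_def power2_eq_square lessThan_atLeast0)
  finally have "l * (\<Sum>r<p*p. (v $ r)^2) \<le> (1 + norm1 p f) * (\<Sum>r<p*p. (v $ r)^2)"
    using IminusC_quad[OF vc(1), of f] cf_quad_bound[OF p, of "\<lambda>r. v $ r" f] by (simp add: algebra_simps)
  thus ?thesis using pos by simp
qed

lemma IminusC_eig_exists:
  assumes p: "0 < p"
  shows "eigenvalue (IminusC p f) (1 - (\<Sum>x\<in>Lam p. f x))"
  unfolding eigenvalue_def eigenvector_def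
proof (intro exI conjI)
  let ?v = "vec (p*p) (\<lambda>_. 1::real)"
  have d: "dim_row (IminusC p f) = p*p" using IminusC_carrier[of p f] by simp
  show "?v \<in> carrier_vec (dim_row (IminusC p f))" unfolding d by simp
  show "?v \<noteq> 0\<^sub>v (dim_row (IminusC p f))" unfolding d using p
    by (metis index_vec index_zero_vec(1) mult_pos_pos zero_neq_one)
  show "IminusC p f *\<^sub>v ?v = (1 - (\<Sum>x\<in>Lam p. f x)) \<cdot>\<^sub>v ?v"
  proof (rule eq_vecI)
    fix r assume "r < dim_vec ((1 - (\<Sum>x\<in>Lam p. f x)) \<cdot>\<^sub>v ?v)"
    hence r: "r < p*p" by simp
    have "(IminusC p f *\<^sub>v ?v) $ r = (\<Sum>s<p*p. IminusC p f $$ (r,s))"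
      using IminusC_carrier[of p f] r by (simp add: scalar_prod_def lessThan_atLeast0)
    also have "\<dots> = (\<Sum>s<p*p. (if r = s then 1 else 0) - cf p f r s)"
      by (rule sum.cong, auto simp: IminusC_index r)
    also have "\<dots> = 1 - (\<Sum>s<p*p. cf p f r s)" using r by (simp add: sum_subtractf)
    also have "\<dots> = 1 - (\<Sum>x\<in>Lam p. f x)" using cf_rowsum[OF p r, of "\<lambda>y. y" f] by simp
    finally show "(IminusC p f *\<^sub>v ?v) $ r = ((1 - (\<Sum>x\<in>Lam p. f x)) \<cdot>\<^sub>v ?v) $ r" using r by simp
  qed (simp add: IminusC_carrier[of p f, THEN carrier_matD(1)])
qed

lemma IminusC_phi:
  assumes p: "0 < p" and R: "norm1 p f < 1"
  shows "phi_max (IminusC p f) < 2"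
proof -
  let ?E = "{k. eigenvalue (IminusC p f) k}"
  have A: "IminusC p f \<in> carrier_mat (p*p) (p*p)" by (rule IminusC_carrier)
  have "char_poly (IminusC p f) \<noteq> 0"
    using degree_monic_char_poly[OF A] by auto
  hence fin: "finite ?E"
    using eigenvalue_root_char_poly[OF A] poly_roots_finite by (simp add: eigenvalue_root_char_poly[OF A])
  have ne: "?E \<noteq> {}" using IminusC_eig_exists[OF p] by blast
  have "\<forall>k\<in>?E. k < 2" using IminusC_eig_bound[OF p] R by fastforce
  thus ?thesis unfolding phi_max_def using Max_less_iff[OF fin ne] by blast
qed




definition sh :: "nat \<Rightarrow> nat \<Rightarrow> nat \<Rightarrow> nat \<times> nat \<Rightarrow> nat \<times> nat" where
  "sh p a c x = (md p (int (fst x) + int a), md p (int (snd x) + int c))"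

lemma md_shift: assumes p: "0 < p"
  shows "md p (int (md p (x + a)) - int (md p (y + a))) = md p (x - y)"
proof -
  have "(int (md p (x + a)) - int (md p (y + a))) mod int p = ((x + a) mod int p - (y + a) mod int p) mod int p"
    unfolding int_md[OF p] ..
  also have "\<dots> = ((x + a) - (y + a)) mod int p" by (rule mod_diff_eq)
  also have "\<dots> = (x - y) mod int p" by simp
  finally show ?thesis unfolding md_def by simp
qed

lemma md_shift2: assumes p: "0 < p" and x: "x < p"
  shows "md p (int (md p (int x + a)) - a) = x"
proof -
  have "md p (int (md p (int x + a)) - a) = md p (int (md p (int x + a)) - int (md p (0 + a)))"
  proof -
    have "(int (md p (int x + a)) - a) mod int p = (int (md p (int x + a)) - int (md p (0 + a))) mod int p"
      unfolding int_md[OF p] by (simp add: mod_diff_right_eq)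
    thus ?thesis unfolding md_def by simp
  qed
  also have "\<dots> = md p (int x - 0)" by (rule md_shift[OF p])
  finally show ?thesis using x by (simp add: md_nat)
qed

lemma md_shift3: assumes p: "0 < p" and x: "x < p"
  shows "md p (a - int (md p (int x + a))) = md p (- int x)"
proof -
  have "(a - int (md p (int x + a))) mod int p = (a - (int x + a)) mod int p"
    unfolding int_md[OF p] by (simp add: mod_diff_right_eq)
  thus ?thesis unfolding md_def by simp
qed

lemma sh_Lam: "0 < p \<Longrightarrow> sh p a c x \<in> Lam p"
  unfolding sh_def Lam_def using md_lt by auto

lemma sh_inj: assumes p: "0 < p" shows "inj_on (sh p a c) (Lam p)"
proof (rule inj_onI)
  fix x y assume x: "x \<in> Lam p" and y: "y \<in> Lam p" and e: "sh p a c x = sh p a c y"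
  have i1: "inj_on (\<lambda>i. md p (1 * int i + int a)) {0..<p}" using bij_md_aff[OF p, of 1 "int a"] bij_betw_def by auto
  have i2: "inj_on (\<lambda>i. md p (1 * int i + int c)) {0..<p}" using bij_md_aff[OF p, of 1 "int c"] bij_betw_def by auto
  have "fst x = fst y" using inj_onD[OF i1, of "fst x" "fst y"] e x y unfolding sh_def Lam_def by auto
  moreover have "snd x = snd y" using inj_onD[OF i2, of "snd x" "snd y"] e x y unfolding sh_def Lam_def by auto
  ultimately show "x = y" by (simp add: prod_eq_iff)
qed

lemma qf_cong2: "(\<And>r s. r < n \<Longrightarrow> s < n \<Longrightarrow> x r * A $$ (r,s) * y s = x' r * A' $$ (r,s) * y' s) \<Longrightarrow> qf n A x y = qf n A' x' y'"
  unfolding qf_def by (intro sum.cong) auto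

lemma closed_eval0: "closed {f :: 'a \<Rightarrow> real. f x = 0}"
  by (rule closed_Collect_eq, rule continuous_on_product_coordinates, rule continuous_on_const)

lemma closed_eval_eq: "closed {f :: 'a \<Rightarrow> real. f x = f y}"
  by (rule closed_Collect_eq; rule continuous_on_product_coordinates)

lemma closed_imp_const: "closed {f. Q f} \<Longrightarrow> closed {f. C \<longrightarrow> Q f}"
  by (cases C) auto

lemma Theta_m_closed: "closed (Theta_m p m)"
proof -
  have "Theta_m p m = {f. \<forall>x. (x \<notin> Lam p \<longrightarrow> f x = 0) \<and> (x = (0,0) \<longrightarrow> f x = 0)
      \<and> (x \<in> Lam p \<longrightarrow> f x = f (md p (- int (fst x)), md p (- int (snd x)))) \<and> (x \<notin> m \<longrightarrow> f x = 0)}"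
    unfolding Theta_m_def Theta_def by auto
  also have "closed \<dots>"
    by (intro closed_Collect_all closed_Collect_conj closed_imp_const closed_eval0 closed_eval_eq)
  finally show ?thesis .
qed

lemma Theta_diff: "t \<in> Theta p \<Longrightarrow> u \<in> Theta p \<Longrightarrow> (\<lambda>x. t x - u x) \<in> Theta p"
  unfolding Theta_def by auto

context L begin

lemma S_trans:
  assumes a: "a < p" and c: "c < p" and rs: "r < n" "s < n"
  shows "S $$ (pig (sh p a c) r, pig (sh p a c) s) = S $$ (r,s)"
proof -
  have G1: "\<And>x. x \<in> Lam p \<Longrightarrow> sh p a c x \<in> Lam p" using sh_Lam[OF p0] by blast
  have pp1: "bij_betw (pig (sh p a c)) {..<n} {..<n}" by (rule pig_bij[OF G1 sh_inj[OF p0]])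
  have pp2: "\<And>r. r < n \<Longrightarrow> (pig (sh p a c) r div p, pig (sh p a c) r mod p) = sh p a c (r div p, r mod p)"
    by (rule pig_dv[of "sh p a c", OF G1])
  have Qp: "\<And>r s. r < n \<Longrightarrow> s < n \<Longrightarrow> Q $$ (pig (sh p a c) r, pig (sh p a c) s) = Q $$ (r,s)"
  proof -
    fix r s assume r: "r < n" and s: "s < n"
    have pr: "pig (sh p a c) r < n" "pig (sh p a c) s < n" using pp1 r s unfolding bij_betw_def by auto
    have eq: "pig (sh p a c) r = pig (sh p a c) s \<longleftrightarrow> r = s" using pp1 r s unfolding bij_betw_def inj_on_def by auto
    have "cf p \<theta> (pig (sh p a c) r) (pig (sh p a c) s) = cf p \<theta> r s"
      unfolding cf_def using pp2[OF r] pp2[OF s] unfolding sh_def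
      by (simp add: md_shift[OF p0])
    thus "Q $$ (pig (sh p a c) r, pig (sh p a c) s) = Q $$ (r,s)" using Q_idx pr r s eq by simp
  qed
  have "K $$ (pig (sh p a c) r, pig (sh p a c) s) = K $$ (r,s)"
    by (rule inv_perm[OF Qc Kc _ _ pp1 Qp rs], insert Kinv, auto)
  moreover have "pig (sh p a c) r < n" "pig (sh p a c) s < n" using rs pp1 unfolding bij_betw_def by auto
  ultimately show ?thesis using rs S_idx by simp
qed

lemma row_sum_trans:
  assumes f: "f \<in> Theta p" and i: "i < n"
  shows "(\<Sum>k<n. \<Sum>l<n. cf p f i k * S $$ (k,l) * cf p f l i) = qf n S (\<lambda>k. f (k div p, k mod p)) (\<lambda>k. f (k div p, k mod p))"
proof -
  define a where "a = i div p"
  define c where "c = i mod p"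
  have ac: "a < p" "c < p" using dv_lt[OF i] unfolding a_def c_def by auto
  let ?g = "sh p a c"
  let ?t = "pig ?g"
  have G1: "\<And>x. x \<in> Lam p \<Longrightarrow> ?g x \<in> Lam p" using sh_Lam[OF p0] by blast
  have pp1: "bij_betw ?t {..<n} {..<n}" by (rule pig_bij[OF G1 sh_inj[OF p0]])
  have pp2: "\<And>r. r < n \<Longrightarrow> (?t r div p, ?t r mod p) = ?g (r div p, r mod p)"
    by (rule pig_dv[of ?g, OF G1])
  have e1: "\<And>k. k < n \<Longrightarrow> cf p f i (?t k) = f (k div p, k mod p)"
  proof -
    fix k assume k: "k < n"
    have "cf p f i (?t k) = f (md p (int (md p (int (k div p) + int a)) - int a), md p (int (md p (int (k mod p) + int c)) - int c))"
      unfolding cf_def using pp2[OF k] unfolding sh_def a_def c_def by simp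
    also have "\<dots> = f (k div p, k mod p)" using dv_lt[OF k] by (simp add: md_shift2[OF p0])
    finally show "cf p f i (?t k) = f (k div p, k mod p)" .
  qed
  have e2: "\<And>l. l < n \<Longrightarrow> cf p f (?t l) i = f (l div p, l mod p)"
  proof -
    fix l assume l: "l < n"
    have "cf p f (?t l) i = f (md p (int a - int (md p (int (l div p) + int a))), md p (int c - int (md p (int (l mod p) + int c))))"
      unfolding cf_def using pp2[OF l] unfolding sh_def a_def c_def by simp
    also have "\<dots> = f (md p (- int (l div p)), md p (- int (l mod p)))" using dv_lt[OF l] by (simp add: md_shift3[OF p0])
    also have "\<dots> = f (l div p, l mod p)" by (rule Theta_sym[OF f dv_Lam[OF l]])
    finally show "cf p f (?t l) i = f (l div p, l mod p)" .
  qed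
  have "(\<Sum>k<n. \<Sum>l<n. cf p f i k * S $$ (k,l) * cf p f l i) = (\<Sum>k<n. \<Sum>l<n. cf p f i (?t k) * S $$ (?t k, l) * cf p f l i)"
    using sum.reindex_bij_betw[OF pp1, of "\<lambda>k. \<Sum>l<n. cf p f i k * S $$ (k,l) * cf p f l i"] by simp
  also have "\<dots> = (\<Sum>k<n. \<Sum>l<n. cf p f i (?t k) * S $$ (?t k, ?t l) * cf p f (?t l) i)"
    by (rule sum.cong[OF refl], rule sum.reindex_bij_betw[OF pp1, symmetric])
  also have "\<dots> = qf n S (\<lambda>k. f (k div p, k mod p)) (\<lambda>k. f (k div p, k mod p))"
    unfolding qf_def by (intro sum.cong) (auto simp: e1 e2 S_trans ac)
  finally show ?thesis .
qed

lemma loss_gamma: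
  assumes t: "t \<in> Theta p"
  shows "loss p s2 \<theta> t \<theta> = gamma p s2 \<theta> t - gamma p s2 \<theta> \<theta>"
proof -
  define f where "f = (\<lambda>x. t x - \<theta> x)"
  have fT: "f \<in> Theta p" unfolding f_def by (rule Theta_diff[OF t thT])
  define fv where "fv = (\<lambda>k. f (k div p, k mod p))"
  define D where "D = Cmat p t - Cmat p \<theta>"
  have Dc: "D \<in> carrier_mat n n" unfolding D_def by (rule minus_carrier_mat[OF Cmat_carrier])
  have D_idx: "\<And>r s. r < n \<Longrightarrow> s < n \<Longrightarrow> D $$ (r,s) = cf p f r s"
    unfolding D_def f_def cf_def using Cmat_carrier[of p \<theta>] by (simp add: Cmat_index cf_def)
  have DSc: "D * S \<in> carrier_mat n n" using Dc Sc by simp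
  have diag: "\<And>i. i < n \<Longrightarrow> (D * S * D) $$ (i,i) = qf n S fv fv"
  proof -
    fix i assume i: "i < n"
    have "(D * S * D) $$ (i,i) = (\<Sum>l<n. (D * S) $$ (i,l) * D $$ (l,i))" by (rule mat_mult_entry[OF DSc Dc i i])
    also have "\<dots> = (\<Sum>l<n. (\<Sum>k<n. D $$ (i,k) * S $$ (k,l)) * D $$ (l,i))"
      by (rule sum.cong[OF refl], simp add: mat_mult_entry[OF Dc Sc i])
    also have "\<dots> = (\<Sum>k<n. \<Sum>l<n. cf p f i k * S $$ (k,l) * cf p f l i)"
      by (subst sum.swap) (auto simp: sum_distrib_right D_idx i intro!: sum.cong)
    also have "\<dots> = qf n S fv fv" unfolding fv_def by (rule row_sum_trans[OF fT i])
    finally show "(D * S * D) $$ (i,i) = qf n S fv fv" .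
  qed
  have dr: "dim_row (D * S * D) = n" using Dc by simp
  have "mtrace (D * S * D) = (\<Sum>i<n. (D * S * D) $$ (i,i))" unfolding mtrace_def dr ..
  also have "\<dots> = (\<Sum>i<n. qf n S fv fv)" by (rule sum.cong[OF refl], rule diag, simp)
  finally have "mtrace (D * S * D) = (\<Sum>i<n. qf n S fv fv)" .
  hence lossq: "loss p s2 \<theta> t \<theta> = qf n S fv fv"
    unfolding loss_def D_def[symmetric] using p0 by (simp add: power2_eq_square)
  have avth: "\<And>s. s < n \<Longrightarrow> av p \<theta> s = Q $$ (s,0)"
  proof -
    fix s assume s: "s < n"
    have "cf p \<theta> s 0 = \<theta> (s div p, s mod p)" using cf_sym[OF thT p0, of s 0] cf_row0[OF s] by simp
    moreover have "\<theta> (0,0) = 0" using thT unfolding Theta_def by simp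
    ultimately show "av p \<theta> s = Q $$ (s,0)" unfolding av_def using Q_idx[OF s] p0 s by auto
  qed
  have fv0: "fv 0 = 0" unfolding fv_def f_def using t thT unfolding Theta_def by simp
  have cross: "qf n S fv (av p \<theta>) = 0"
  proof -
    have "qf n S fv (av p \<theta>) = (\<Sum>r<n. fv r * (\<Sum>s<n. S $$ (r,s) * Q $$ (s,0)))"
      unfolding qf_row by (intro sum.cong) (auto simp: avth)
    also have "\<dots> = (\<Sum>r<n. fv r * (s2 * (K * Q) $$ (r,0)))"
      using p0 by (intro sum.cong) (auto simp: mat_mult_entry[OF Kc Qc] S_idx sum_distrib_left mult.assoc)
    also have "\<dots> = (\<Sum>r<n. fv r * (s2 * (if r = 0 then 1 else 0)))"
      using Kinv p0 by (intro sum.cong) auto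
    also have "\<dots> = 0" using fv0 by (simp add: if_distrib cong: if_cong)
    finally show ?thesis .
  qed
  have t00: "t (0,0) = 0" "\<theta> (0,0) = 0" using t thT unfolding Theta_def by auto
  have avt: "\<And>r. r < n \<Longrightarrow> av p t r = av p \<theta> r - fv r"
    unfolding av_def fv_def f_def using t00 by auto
  have "gamma p s2 \<theta> t = qf n S (\<lambda>r. av p \<theta> r - fv r) (\<lambda>r. av p \<theta> r - fv r)"
    unfolding gamma_qf by (rule qf_cong; simp add: avt)
  also have "\<dots> = gamma p s2 \<theta> \<theta> + qf n S fv fv"
    unfolding qf_diff gamma_qf using cross Ssym_qf[of fv "av p \<theta>"] by simp
  finally show ?thesis using lossq by simp
qed

lemma theta_proj_beta:
  assumes bX: "beta \<in> X" and X: "X \<subseteq> Theta_m p m"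
  shows "theta_proj p s2 \<theta> X = beta"
proof -
  have cl: "closure X \<subseteq> Theta_m p m" using closure_minimal[OF X Theta_m_closed] .
  have bcl: "beta \<in> closure X" using bX closure_subset by blast
  have TF: "\<And>t. t \<in> closure X \<Longrightarrow> t \<in> Theta p \<and> (\<forall>x. x \<notin> m \<longrightarrow> t x = 0)"
    using cl unfolding Theta_m_def by auto
  have am: "is_argmin_on (\<lambda>t'. loss p s2 \<theta> t' \<theta>) (closure X) beta"
    unfolding is_argmin_on_def
  proof (intro conjI ballI bcl)
    fix y assume "y \<in> closure X"
    with TF have y: "y \<in> Theta p" "\<forall>x. x \<notin> m \<longrightarrow> y x = 0" by auto
    show "loss p s2 \<theta> beta \<theta> \<le> loss p s2 \<theta> y \<theta>"
      using loss_gamma[OF y(1)] loss_gamma TF[OF bcl] beta_min[OF y(2)] by simp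
  qed
  have un: "\<And>t. is_argmin_on (\<lambda>t'. loss p s2 \<theta> t' \<theta>) (closure X) t \<Longrightarrow> t = beta"
  proof -
    fix t assume "is_argmin_on (\<lambda>t'. loss p s2 \<theta> t' \<theta>) (closure X) t"
    hence tc: "t \<in> closure X" and le: "loss p s2 \<theta> t \<theta> \<le> loss p s2 \<theta> beta \<theta>"
      unfolding is_argmin_on_def using bcl by auto
    have "gamma p s2 \<theta> t \<le> gamma p s2 \<theta> beta"
      using le loss_gamma TF[OF tc] TF[OF bcl] by simp
    thus "t = beta" using beta_uniq TF[OF tc] by blast
  qed
  show ?thesis unfolding theta_proj_def using am un by (rule the_equality)
qed

end



context L begin

lemma cond_var_gamma: "cond_var p s2 \<theta> m = gamma p s2 \<theta> beta"
proof -
  define V where "V = submatrix S {0} M"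
  have c1: "card {i. i < dim_row S \<and> i \<in> {0::nat}} = 1"
  proof -
    have "{i. i < dim_row S \<and> i \<in> {0::nat}} = {0}" using Sc p0 by auto
    thus ?thesis by simp
  qed
  have Vc: "V \<in> carrier_mat 1 k" unfolding V_def submatrix_def using c1 card_M by simp
  have V_idx: "\<And>a. a < k \<Longrightarrow> V $$ (0,a) = S $$ (0, pick M a)"
    unfolding V_def using submatrix_index[of 0 S "{0}" _ M] c1 card_M by simp
  have "(V * Tinv) * U = V * W" using assoc_mult_mat[OF Vc _ Uc, of Tinv] Tinv by simp
  hence "(V * Tinv * U) $$ (0,0) = (\<Sum>a<k. V $$ (0,a) * W $$ (a,0))"
    using mult_entry_gen[OF Vc Wc, of 0 0] by simp
  also have "\<dots> = (\<Sum>a<k. W $$ (a,0) * S $$ (0, pick M a))"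
    by (rule sum.cong, auto simp: V_idx mult.commute)
  also have "\<dots> = (\<Sum>s<n. b s * S $$ (0,s))" unfolding b_def by (rule pick_sum[symmetric])
  finally have cv: "cond_var p s2 \<theta> m = S $$ (0,0) - (\<Sum>s<n. b s * S $$ (0,s))"
    unfolding cond_var_def Let_def V_def by simp
  define g where "g = (\<lambda>r. \<Sum>s<n. S $$ (r,s) * av p beta s)"
  have n0: "0 < n" using p0 by simp
  have "gamma p s2 \<theta> beta = (\<Sum>r<n. av p beta r * g r)" unfolding gamma_qf qf_row g_def ..
  also have "\<dots> = av p beta 0 * g 0 + (\<Sum>r\<in>{..<n} - {0}. av p beta r * g r)"
    using n0 by (subst sum.remove[of _ 0]) auto
  also have "(\<Sum>r\<in>{..<n} - {0}. av p beta r * g r) = 0"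
  proof (rule sum.neutral, rule ballI)
    fix r assume r: "r \<in> {..<n} - {0}"
    show "av p beta r * g r = 0"
    proof (cases "r \<in> M")
      case True thus ?thesis using gres unfolding g_def by simp
    next
      case False thus ?thesis using r av_beta b_out by auto
    qed
  qed
  also have "av p beta 0 = 1" unfolding av_def by simp
  also have "g 0 = (\<Sum>s<n. (if s = 0 then S $$ (0,s) else 0) - b s * S $$ (0,s))"
    unfolding g_def by (rule sum.cong, auto simp: av_beta algebra_simps)
  also have "\<dots> = S $$ (0,0) - (\<Sum>s<n. b s * S $$ (0,s))"
    using n0 by (simp add: sum_subtractf)
  finally show ?thesis using cv by simp
qed

lemma beta_Theta: "beta \<in> Theta p"
  unfolding Theta_def
proof (intro CollectI conjI allI impI)
  fix x assume "x \<notin> Lam p"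
  hence "x \<notin> m" using m_sub by auto
  thus "beta x = 0" by (rule beta_out)
next
  show "beta (0,0) = 0" using m_sub beta_out by auto
next
  fix i j assume ij: "(i,j) \<in> Lam p"
  have G5: "\<And>x. x \<in> Lam p \<Longrightarrow> \<theta> (gmap p False True True x) = \<theta> x"
    unfolding gmap_def ng_def using Theta_sym[OF thT] by (metis prod.collapse)
  have "beta (gmap p False True True (i,j)) = beta (i,j)" by (rule beta_gmap[OF G5 ij])
  thus "beta (i,j) = beta (md p (- int i), md p (- int j))" unfolding gmap_def ng_def by simp
qed

lemma beta_Theta_m: "beta \<in> Theta_m p m"
  unfolding Theta_m_def using beta_Theta beta_out by auto

lemma beta_plus2: "beta \<in> ThetaPlus_m_rho p m 2"
proof -
  have nb: "norm1 p beta < 1" using norm1_beta R1 by linarith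
  show ?thesis unfolding ThetaPlus_m_rho_def ThetaPlus_m_def ThetaPlus_def
    using beta_Theta_m beta_Theta IminusC_pd[OF p0 nb] IminusC_phi[OF p0 nb] by auto
qed

lemma beta_iso: assumes "\<theta> \<in> Theta_iso p" shows "beta \<in> Theta_iso p"
  unfolding Theta_iso_def
proof (intro CollectI conjI ballI beta_Theta)
  fix g x assume g: "g \<in> G_iso p" and x: "x \<in> Lam p"
  obtain sw sa sb where gg: "g = gmap p sw sa sb" using G_iso_gmap[OF g] by blast
  have "\<And>y. y \<in> Lam p \<Longrightarrow> \<theta> (gmap p sw sa sb y) = \<theta> y" using assms g gg unfolding Theta_iso_def by auto
  thus "beta (g x) = beta x" using beta_gmap x gg by simp
qed

lemma beta_rho: "\<rho>1 \<ge> 2 \<Longrightarrow> beta \<in> ThetaPlus_m_rho p m \<rho>1"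
  using beta_plus2 unfolding ThetaPlus_m_rho_def by auto

lemma rho_sub: "ThetaPlus_m_rho p m \<rho>1 \<subseteq> Theta_m p m"
  unfolding ThetaPlus_m_rho_def ThetaPlus_m_def by auto

lemma argmin_set:
  assumes bY: "beta \<in> Y" and Y: "Y \<subseteq> Theta_m p m"
  shows "is_argmin_on (gamma p s2 \<theta>) Y beta" and "{t. is_argmin_on (gamma p s2 \<theta>) Y t} = {beta}"
proof -
  have F: "\<And>y. y \<in> Y \<Longrightarrow> \<forall>x. x \<notin> m \<longrightarrow> y x = 0" using Y unfolding Theta_m_def by auto
  show am: "is_argmin_on (gamma p s2 \<theta>) Y beta"
    unfolding is_argmin_on_def using bY beta_min F by auto
  show "{t. is_argmin_on (gamma p s2 \<theta>) Y t} = {beta}"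
  proof -
    have "\<And>t. is_argmin_on (gamma p s2 \<theta>) Y t \<Longrightarrow> t = beta"
    proof -
      fix t assume "is_argmin_on (gamma p s2 \<theta>) Y t"
      hence "t \<in> Y" "gamma p s2 \<theta> t \<le> gamma p s2 \<theta> beta" using bY unfolding is_argmin_on_def by auto
      thus "t = beta" using beta_uniq F by blast
    qed
    thus ?thesis using am by blast
  qed
qed

lemma final:
  assumes r: "\<rho>1 \<ge> 2"
  shows "(\<exists>t \<in> ThetaPlus_m_rho p m 2. is_argmin_on (gamma p s2 \<theta>) (Theta_m p m) t)
       \<and> {t. is_argmin_on (gamma p s2 \<theta>) (Theta_m p m) t}
            = {theta_proj p s2 \<theta> (ThetaPlus_m_rho p m \<rho>1)}
       \<and> gamma p s2 \<theta> (theta_proj p s2 \<theta> (ThetaPlus_m_rho p m \<rho>1)) = cond_var p s2 \<theta> m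
       \<and> norm1 p (theta_proj p s2 \<theta> (ThetaPlus_m_rho p m \<rho>1)) \<le> norm1 p \<theta>
       \<and> (\<theta> \<in> Theta_iso p \<longrightarrow>
           (\<exists>t \<in> ThetaPlus_m_rho p m 2 \<inter> Theta_iso p.
               is_argmin_on (gamma p s2 \<theta>) (Theta_m p m \<inter> Theta_iso p) t)
         \<and> {t. is_argmin_on (gamma p s2 \<theta>) (Theta_m p m \<inter> Theta_iso p) t}
            = {theta_proj p s2 \<theta> (ThetaPlus_m_rho p m \<rho>1 \<inter> Theta_iso p)}
         \<and> gamma p s2 \<theta> (theta_proj p s2 \<theta> (ThetaPlus_m_rho p m \<rho>1 \<inter> Theta_iso p))
             = cond_var p s2 \<theta> m
         \<and> norm1 p (theta_proj p s2 \<theta> (ThetaPlus_m_rho p m \<rho>1 \<inter> Theta_iso p)) \<le> norm1 p \<theta>)"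
proof -
  have tp: "theta_proj p s2 \<theta> (ThetaPlus_m_rho p m \<rho>1) = beta"
    by (rule theta_proj_beta[OF beta_rho[OF r] rho_sub])
  have A: "(\<exists>t \<in> ThetaPlus_m_rho p m 2. is_argmin_on (gamma p s2 \<theta>) (Theta_m p m) t)"
    using beta_plus2 argmin_set(1)[OF beta_Theta_m order_refl] by blast
  have B: "{t. is_argmin_on (gamma p s2 \<theta>) (Theta_m p m) t} = {theta_proj p s2 \<theta> (ThetaPlus_m_rho p m \<rho>1)}"
    unfolding tp by (rule argmin_set(2)[OF beta_Theta_m order_refl])
  have C: "\<theta> \<in> Theta_iso p \<longrightarrow>
           (\<exists>t \<in> ThetaPlus_m_rho p m 2 \<inter> Theta_iso p.
               is_argmin_on (gamma p s2 \<theta>) (Theta_m p m \<inter> Theta_iso p) t)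
         \<and> {t. is_argmin_on (gamma p s2 \<theta>) (Theta_m p m \<inter> Theta_iso p) t}
            = {theta_proj p s2 \<theta> (ThetaPlus_m_rho p m \<rho>1 \<inter> Theta_iso p)}
         \<and> gamma p s2 \<theta> (theta_proj p s2 \<theta> (ThetaPlus_m_rho p m \<rho>1 \<inter> Theta_iso p))
             = cond_var p s2 \<theta> m
         \<and> norm1 p (theta_proj p s2 \<theta> (ThetaPlus_m_rho p m \<rho>1 \<inter> Theta_iso p)) \<le> norm1 p \<theta>"
  proof
    assume iso: "\<theta> \<in> Theta_iso p"
    have bi: "beta \<in> Theta_iso p" by (rule beta_iso[OF iso])
    have tpi: "theta_proj p s2 \<theta> (ThetaPlus_m_rho p m \<rho>1 \<inter> Theta_iso p) = beta"
      by (rule theta_proj_beta, use beta_rho[OF r] bi in simp, use rho_sub in blast)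
    have Y: "beta \<in> Theta_m p m \<inter> Theta_iso p" "Theta_m p m \<inter> Theta_iso p \<subseteq> Theta_m p m"
      using beta_Theta_m bi by auto
    show "(\<exists>t \<in> ThetaPlus_m_rho p m 2 \<inter> Theta_iso p.
               is_argmin_on (gamma p s2 \<theta>) (Theta_m p m \<inter> Theta_iso p) t)
         \<and> {t. is_argmin_on (gamma p s2 \<theta>) (Theta_m p m \<inter> Theta_iso p) t}
            = {theta_proj p s2 \<theta> (ThetaPlus_m_rho p m \<rho>1 \<inter> Theta_iso p)}
         \<and> gamma p s2 \<theta> (theta_proj p s2 \<theta> (ThetaPlus_m_rho p m \<rho>1 \<inter> Theta_iso p))
             = cond_var p s2 \<theta> m
         \<and> norm1 p (theta_proj p s2 \<theta> (ThetaPlus_m_rho p m \<rho>1 \<inter> Theta_iso p)) \<le> norm1 p \<theta>"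
      unfolding tpi using argmin_set[OF Y] beta_plus2 bi cond_var_gamma norm1_beta by auto
  qed
  show ?thesis using A B C tp cond_var_gamma norm1_beta by simp
qed

end

theorem mainTheorem5:
  fixes p :: nat and s2 \<rho>1 :: real and \<theta> :: "nat \<times> nat \<Rightarrow> real" and m :: "(nat \<times> nat) set"
  assumes "p \<ge> 2" and "s2 > 0" and "\<rho>1 \<ge> 2"
    and "\<theta> \<in> ThetaPlus p" and "norm1 p \<theta> < 1" and "m \<in> M1 p"
  shows "(\<exists>t \<in> ThetaPlus_m_rho p m 2. is_argmin_on (gamma p s2 \<theta>) (Theta_m p m) t)
       \<and> {t. is_argmin_on (gamma p s2 \<theta>) (Theta_m p m) t}
            = {theta_proj p s2 \<theta> (ThetaPlus_m_rho p m \<rho>1)}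
       \<and> gamma p s2 \<theta> (theta_proj p s2 \<theta> (ThetaPlus_m_rho p m \<rho>1)) = cond_var p s2 \<theta> m
       \<and> norm1 p (theta_proj p s2 \<theta> (ThetaPlus_m_rho p m \<rho>1)) \<le> norm1 p \<theta>
       \<and> (\<theta> \<in> Theta_iso p \<longrightarrow>
           (\<exists>t \<in> ThetaPlus_m_rho p m 2 \<inter> Theta_iso p.
               is_argmin_on (gamma p s2 \<theta>) (Theta_m p m \<inter> Theta_iso p) t)
         \<and> {t. is_argmin_on (gamma p s2 \<theta>) (Theta_m p m \<inter> Theta_iso p) t}
            = {theta_proj p s2 \<theta> (ThetaPlus_m_rho p m \<rho>1 \<inter> Theta_iso p)}
         \<and> gamma p s2 \<theta> (theta_proj p s2 \<theta> (ThetaPlus_m_rho p m \<rho>1 \<inter> Theta_iso p))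
             = cond_var p s2 \<theta> m
         \<and> norm1 p (theta_proj p s2 \<theta> (ThetaPlus_m_rho p m \<rho>1 \<inter> Theta_iso p)) \<le> norm1 p \<theta>)"
proof -
  interpret L p s2 \<theta> m using assms by unfold_locales
  show ?thesis by (rule final[OF assms(3)])
qed


end
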